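(* Let $\mathfrak g$ be a complex simple Lie algebra with real form $\mathfrak g^{\mathbf R}$ and complexified Cartan decomposition $\mathfrak g=\mathfrak h\oplus\mathfrak m$. An $\mathfrak{sl}_2$-triple $\hat\rho:\mathfrak{sl}_2\mathbf R\to\mathfrak g^{\mathbf R}$ with Cayley transform $\rho$ is an extended magical triple if and only if $\mathfrak c\subset\mathfrak h$ and $$\dim\mathfrak m-\dim\mathfrak h=\dim\mathfrak g_0-2\dim\mathfrak c.$$ In particular, if $\hat\rho$ is extended magical, then $\mathfrak c^{\mathbf R}:=\mathfrak c\cap\mathfrak g^{\mathbf R}$ is contained in $\mathfrak h^{\mathbf R}$ and is compact, i.e. the Killing form restricted to $\mathfrak c^{\mathbf R}$ is negative definite.
   Context: $\mathfrak g^{\mathbf R}=\mathfrak h^{\mathbf R}\oplus\mathfrak m^{\mathbf R}$ is a Cartan decomposition with complexification $\mathfrak g=\mathfrak h\oplus\mathfrak m$ and $\sigma$ the involution equal to $+1$ on $\mathfrak h$, $-1$ on $\mathfrak m$. A complex $\mathfrak{sl}_2$-triple $\rho$ has image spanned by $e,h,f$ with $[h,e]=2e,[h,f]=-2f,[e,f]=h$; $\mathfrak g_j$ is the $j$-eigenspace of $\mathrm{ad}_h$; $\mathfrak g=\bigoplus_jW_j$ with $W_j$ the isotypic component of the $(j+1)$-dimensional irreducible $\mathfrak{sl}_2$-representation, $V_j=W_j\cap\ker\mathrm{ad}_e$, $W_j=\bigoplus_{k=0}^j(\mathrm{ad}_f)^kV_j$, and $\mathfrak c=V_0$ is the centralizer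 of $\{e,h,f\}$. The magical linear map is $\sigma^{\mathrm{mag}}_\rho=\mathrm{id}$ on $V_0$ and $(-1)^{k+1}$ on $(\mathrm{ad}_f)^kV_j$, $j>0$. $\rho$ is extended magical if some Lie algebra involution $\sigma_\rho$ of $\mathfrak g$ agrees with $\sigma^{\mathrm{mag}}_\rho$ on $\bigoplus_{j\text{ even}}W_j$; the canonical real form is the real form whose complexified Cartan involution is $\sigma_\rho$. A real triple $\hat\rho$ (with image $\hat e,\hat h,\hat f$, normalized to be a Cayley triple: $\sigma(\hat e)=-\hat f,\sigma(\hat h)=-\hat h$) has Cayley transform the normal triple $h=i(\hat e-\hat f)$, $e=\frac12(\hat e+\hat f+i\hat h)$, $f=\frac12(\hat e+\hat f-i\hat h)$ (so $\sigma(e)=-e,\sigma(h)=h,\sigma(f)=-f$). $\hat\rho$ is extended magical if $\rho$ is extended magical with canonical real form $\mathfrak g^{\mathbf R}$ (equivalently, $\sigma$ is $+1$ on $\mathfrak c$ and $-1$ on $\bigoplus_{j>0}V_{2j}$). *)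

theory Defs
  imports "HOL-Analysis.Analysis"
begin

text \<open>The complex Lie algebra g is modelled on the complex vector space complex^'n
  (every finite-dimensional complex vector space is isomorphic to one of these);
  the Lie bracket is an arbitrary map br.  Complex linear algebra uses the
  library interpretation vec (scalar multiplication *s).\<close>

type_synonym 'n cvec = "complex ^ 'n"

definition lie_algebra :: "('n::finite cvec \<Rightarrow> 'n cvec \<Rightarrow> 'n cvec) \<Rightarrow> bool" where
  "lie_algebra br \<longleftrightarrow>
     (\<forall>x. Vector_Spaces.linear (*s) (*s) (br x)) \<and>
     (\<forall>y. Vector_Spaces.linear (*s) (*s) (\<lambda>x. br x y)) \<and>
     (\<forall>x. br x x = 0) \<and>
     (\<forall>x y z. br x (br y z) + br y (br z x) + br z (br x y) = 0)"

definition lie_ideal :: "('n::finite cvec \<Rightarrow> 'n cvec \<Rightarrow> 'n cvec) \<Rightarrow> 'n cvec set \<Rightarrow> bool" where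
  "lie_ideal br I \<longleftrightarrow> vec.subspace I \<and> (\<forall>x i. i \<in> I \<longrightarrow> br x i \<in> I)"

text \<open>Simple: non-abelian and without nontrivial ideals.\<close>
definition simple_lie_algebra :: "('n::finite cvec \<Rightarrow> 'n cvec \<Rightarrow> 'n cvec) \<Rightarrow> bool" where
  "simple_lie_algebra br \<longleftrightarrow> lie_algebra br \<and> (\<exists>x y. br x y \<noteq> 0) \<and>
     (\<forall>I. lie_ideal br I \<longrightarrow> I = {0} \<or> I = UNIV)"

text \<open>Trace of a (complex-linear) endomorphism of complex^'n.\<close>
definition ctrace :: "('n::finite cvec \<Rightarrow> 'n cvec) \<Rightarrow> complex" where
  "ctrace L = (\<Sum>i\<in>UNIV. L (axis i 1) $ i)"

definition killing :: "('n::finite cvec \<Rightarrow> 'n cvec \<Rightarrow> 'n cvec) \<Rightarrow> 'n cvec \<Rightarrow> 'n cvec \<Rightarrow> complex" where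
  "killing br x y = ctrace (\<lambda>z. br x (br y z))"

definition lie_automorphism :: "('n::finite cvec \<Rightarrow> 'n cvec \<Rightarrow> 'n cvec) \<Rightarrow> ('n cvec \<Rightarrow> 'n cvec) \<Rightarrow> bool" where
  "lie_automorphism br s \<longleftrightarrow> Vector_Spaces.linear (*s) (*s) s \<and> bij s \<and>
     (\<forall>x y. s (br x y) = br (s x) (s y))"

text \<open>A real form of g, given by its conjugation tau (antilinear involutive Lie algebra
  automorphism); the real form is the fixed point set of tau.\<close>
definition real_form_conj :: "('n::finite cvec \<Rightarrow> 'n cvec \<Rightarrow> 'n cvec) \<Rightarrow> ('n cvec \<Rightarrow> 'n cvec) \<Rightarrow> bool" where
  "real_form_conj br tau \<longleftrightarrow>
     (\<forall>x y. tau (x + y) = tau x + tau y) \<and>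
     (\<forall>c x. tau (c *s x) = cnj c *s tau x) \<and>
     (\<forall>x. tau (tau x) = x) \<and>
     (\<forall>x y. tau (br x y) = br (tau x) (tau y))"

definition real_form :: "('n::finite cvec \<Rightarrow> 'n cvec) \<Rightarrow> 'n cvec set" where
  "real_form tau = {x. tau x = x}"

text \<open>sg is (sigma) the complexification of a Cartan involution theta of the real form:
  a complex-linear involutive automorphism of g preserving the real form, whose
  restriction theta satisfies: -B(X, theta X) > 0 for all nonzero X in the real form.\<close>
definition complexified_cartan_involution ::
  "('n::finite cvec \<Rightarrow> 'n cvec \<Rightarrow> 'n cvec) \<Rightarrow> ('n cvec \<Rightarrow> 'n cvec) \<Rightarrow> ('n cvec \<Rightarrow> 'n cvec) \<Rightarrow> bool" where
  "complexified_cartan_involution br tau sg \<longleftrightarrow>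
     lie_automorphism br sg \<and> (\<forall>x. sg (sg x) = x) \<and>
     (\<forall>x. tau (sg x) = sg (tau x)) \<and>
     (\<forall>x\<in>real_form tau. x \<noteq> 0 \<longrightarrow>
        Im (killing br x (sg x)) = 0 \<and> Re (killing br x (sg x)) < 0)"

definition plus_space :: "('n::finite cvec \<Rightarrow> 'n cvec) \<Rightarrow> 'n cvec set" where
  "plus_space sg = {x. sg x = x}"     (* h *)

definition minus_space :: "('n::finite cvec \<Rightarrow> 'n cvec) \<Rightarrow> 'n cvec set" where
  "minus_space sg = {x. sg x = - x}"  (* m *)

definition sl2_triple :: "('n::finite cvec \<Rightarrow> 'n cvec \<Rightarrow> 'n cvec) \<Rightarrow> 'n cvec \<Rightarrow> 'n cvec \<Rightarrow> 'n cvec \<Rightarrow> bool" where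
  "sl2_triple br e h f \<longleftrightarrow> br h e = 2 *s e \<and> br h f = - (2 *s f) \<and> br e f = h"

text \<open>Cayley transform of a (Cayley) real triple (ehat, hhat, fhat).\<close>
definition cayley_h :: "'n::finite cvec \<Rightarrow> 'n cvec \<Rightarrow> 'n cvec \<Rightarrow> 'n cvec" where
  "cayley_h eh hh fh = \<i> *s (eh - fh)"
definition cayley_e :: "'n::finite cvec \<Rightarrow> 'n cvec \<Rightarrow> 'n cvec \<Rightarrow> 'n cvec" where
  "cayley_e eh hh fh = (1/2) *s (eh + fh + \<i> *s hh)"
definition cayley_f :: "'n::finite cvec \<Rightarrow> 'n cvec \<Rightarrow> 'n cvec \<Rightarrow> 'n cvec" where
  "cayley_f eh hh fh = (1/2) *s (eh + fh - \<i> *s hh)"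

text \<open>g_j: j-eigenspace of ad_h.\<close>
definition grade_space :: "('n::finite cvec \<Rightarrow> 'n cvec \<Rightarrow> 'n cvec) \<Rightarrow> 'n cvec \<Rightarrow> int \<Rightarrow> 'n cvec set" where
  "grade_space br h j = {x. br h x = of_int j *s x}"

text \<open>V_j = W_j \<inter> ker ad_e: the highest weight vectors of weight j, i.e. ker ad_e \<inter> g_j.\<close>
definition hw_space :: "('n::finite cvec \<Rightarrow> 'n cvec \<Rightarrow> 'n cvec) \<Rightarrow> 'n cvec \<Rightarrow> 'n cvec \<Rightarrow> nat \<Rightarrow> 'n cvec set" where
  "hw_space br e h j = {x. br e x = 0 \<and> br h x = of_nat j *s x}"

text \<open>Centralizer c of {e,h,f}.\<close>
definition centralizer3 :: "('n::finite cvec \<Rightarrow> 'n cvec \<Rightarrow> 'n cvec) \<Rightarrow> 'n cvec \<Rightarrow> 'n cvec \<Rightarrow> 'n cvec \<Rightarrow> 'n cvec set" where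
  "centralizer3 br e h f = {x. br e x = 0 \<and> br h x = 0 \<and> br f x = 0}"

text \<open>A map s agrees with the magical linear map of (e,h,f) on the sum of the W_j, j even.
  Since W_j is the (direct) sum of the (ad_f)^k V_j, 0 \<le> k \<le> j, and the magical map is
  defined piecewise on these summands, agreement means agreement on each summand.\<close>
definition agrees_with_magical_even ::
  "('n::finite cvec \<Rightarrow> 'n cvec \<Rightarrow> 'n cvec) \<Rightarrow> ('n cvec \<Rightarrow> 'n cvec) \<Rightarrow> 'n cvec \<Rightarrow> 'n cvec \<Rightarrow> 'n cvec \<Rightarrow> bool" where
  "agrees_with_magical_even br s e h f \<longleftrightarrow>
     (\<forall>j k v. even j \<longrightarrow> k \<le> j \<longrightarrow> v \<in> hw_space br e h j \<longrightarrow>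
        s ((br f ^^ k) v) = (if j = 0 then (br f ^^ k) v
                              else ((-1) ^ (k + 1) :: complex) *s (br f ^^ k) v))"

text \<open>The real triple is extended magical iff its Cayley transform is extended magical with
  canonical real form the given real form, i.e. the involution sigma_rho can be taken to be
  the complexified Cartan involution sg of the given real form.\<close>
definition extended_magical_real ::
  "('n::finite cvec \<Rightarrow> 'n cvec \<Rightarrow> 'n cvec) \<Rightarrow> ('n cvec \<Rightarrow> 'n cvec) \<Rightarrow> 'n cvec \<Rightarrow> 'n cvec \<Rightarrow> 'n cvec \<Rightarrow> bool" where
  "extended_magical_real br sg eh hh fh \<longleftrightarrow>
     agrees_with_magical_even br sg (cayley_e eh hh fh) (cayley_h eh hh fh) (cayley_f eh hh fh)"

end

theory Submission
  imports Defs "HOL-Computational_Algebra.Fundamental_Theorem_Algebra"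
begin

abbreviation lin :: "('n::finite cvec \<Rightarrow> 'n cvec) \<Rightarrow> bool" where
  "lin f \<equiv> Vector_Spaces.linear ((*s)::complex \<Rightarrow> _) (*s) f"

definition ssum :: "'n::finite cvec set \<Rightarrow> 'n cvec set \<Rightarrow> 'n cvec set" where
  "ssum A B = {x + y |x y. x \<in> A \<and> y \<in> B}"

lemma dim_ssum:
  assumes "vec.subspace A" "vec.subspace B" "A \<inter> B \<subseteq> {0}"
  shows "vec.dim (ssum A B) = vec.dim A + vec.dim B"
proof -
  have "vec.dim (A \<inter> B) = 0" using assms(3) by simp
  then show ?thesis using vec.dim_sums_Int[OF assms(1,2)] unfolding ssum_def by linarith
qed

lemma rank_nullity:
  assumes f: "lin f" and S: "vec.subspace S"
  shows "vec.dim S = vec.dim (S \<inter> {x. f x = 0}) + vec.dim (f ` S)"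
proof -
  let ?K = "S \<inter> {x. f x = 0}"
  obtain B where B: "B \<subseteq> ?K" "vec.independent B" "?K \<subseteq> vec.span B" "card B = vec.dim ?K"
    using vec.basis_exists[of ?K] by blast
  obtain C where C: "B \<subseteq> C" "C \<subseteq> S" "vec.independent C" "S \<subseteq> vec.span C"
    using vec.maximal_independent_subset_extend[of B S] B by blast
  have finC: "finite C" using C(3) vec.finiteI_independent by blast
  define D where "D = C - B"
  have CBD: "C = B \<union> D" "B \<inter> D = {}" using C(1) D_def by auto
  have indD: "vec.independent D" using C(3) D_def vec.independent_mono by blast
  have cardC: "card C = card B + card D"
  proof -
    have "finite B" "finite D" using finC CBD(1) by (auto intro: finite_subset)
    then show ?thesis using CBD card_Un_disjoint by simp
  qed
  have dimC: "vec.dim S = card C"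
    using vec.basis_card_eq_dim[OF C(2) C(4) C(3)] by simp
  have "vec.dim (vec.span B) + vec.dim (vec.span D) = vec.dim (ssum (vec.span B) (vec.span D)) + vec.dim (vec.span B \<inter> vec.span D)"
    using vec.dim_sums_Int[of "vec.span B" "vec.span D"] unfolding ssum_def by simp
  moreover have "ssum (vec.span B) (vec.span D) = vec.span C"
    unfolding ssum_def CBD vec.span_Un by simp
  moreover have "vec.dim (vec.span C) = card C" using C(3) vec.dim_span_eq_card_independent by blast
  moreover have "vec.dim (vec.span B) = card B" using B(2) vec.dim_span_eq_card_independent by blast
  moreover have "vec.dim (vec.span D) = card D" using indD vec.dim_span_eq_card_independent by blast
  ultimately have "vec.dim (vec.span B \<inter> vec.span D) = 0" using cardC
    by (metis (no_types) add_left_imp_eq add.right_neutral)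
  then have BD0: "vec.span B \<inter> vec.span D \<subseteq> {0}" by simp
  have spanK: "vec.span B = ?K"
  proof -
    have "vec.subspace ?K" using S vec.linear_subspace_kernel[OF f]
      by (simp add: vec.subspace_inter)
    then show ?thesis by (rule subset_antisym[OF vec.span_minimal[OF B(1)] B(3)])
  qed
  have DS: "vec.span D \<subseteq> S"
    by (rule vec.span_minimal) (use C(2) D_def S in auto)
  have inj: "inj_on f (vec.span (vec.span D))"
  proof (rule inj_onI)
    fix x y assume xy: "x \<in> vec.span (vec.span D)" "y \<in> vec.span (vec.span D)" "f x = f y"
    have "x - y \<in> vec.span D" using xy(1,2) vec.span_diff[of x "vec.span D" y] by (simp add: vec.span_span)
    moreover have "f (x - y) = 0" using xy(3) f by (simp add: vec.linear_diff)
    ultimately have "x - y \<in> ?K" using DS by auto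
    with \<open>x - y \<in> vec.span D\<close> have "x - y \<in> vec.span B \<inter> vec.span D" using spanK by auto
    then show "x = y" using BD0 by auto
  qed
  have "vec.dim (f ` vec.span D) = vec.dim (vec.span D)"
    using vec.dim_image_eq[OF f inj] .
  moreover have "vec.span (f ` vec.span D) = vec.span (f ` S)"
  proof -
    have "f ` S \<subseteq> vec.span (f ` vec.span D)"
    proof
      fix y assume "y \<in> f ` S"
      then obtain x where x: "x \<in> S" "y = f x" by auto
      then have "x \<in> ssum (vec.span B) (vec.span D)"
        using C(4) \<open>ssum (vec.span B) (vec.span D) = vec.span C\<close> by auto
      then obtain b d where bd: "x = b + d" "b \<in> vec.span B" "d \<in> vec.span D" unfolding ssum_def by auto
      have "f b = 0" using bd(2) spanK by auto
      then have "y = f d" using x bd f by (simp add: vec.linear_add)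
      then show "y \<in> vec.span (f ` vec.span D)" using bd(3) by (simp add: vec.span_base)
    qed
    moreover have "f ` vec.span D \<subseteq> f ` S" using DS by auto
    ultimately show ?thesis
      using vec.span_mono[of "f ` S" "vec.span (f ` vec.span D)"] vec.span_mono[of "f ` vec.span D" "f ` S"]
      by (simp add: vec.span_span subset_antisym)
  qed
  ultimately have "vec.dim (f ` S) = card D"
    using vec.dim_span[of "f ` S"] vec.dim_span[of "f ` vec.span D"]
      vec.dim_span_eq_card_independent[OF indD] by simp
  then show ?thesis using dimC cardC B(4) by simp
qed

primrec levc :: "complex list \<Rightarrow> ('n::finite cvec \<Rightarrow> 'n cvec) \<Rightarrow> 'n cvec \<Rightarrow> 'n cvec" where
  "levc [] T v = 0"
| "levc (a # as) T v = a *s v + T (levc as T v)"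

definition peval :: "complex poly \<Rightarrow> ('n::finite cvec \<Rightarrow> 'n cvec) \<Rightarrow> 'n cvec \<Rightarrow> 'n cvec" where
  "peval p T v = levc (coeffs p) T v"

lemma peval_0[simp]: "peval 0 T v = 0"
  by (simp add: peval_def)

lemma peval_pCons:
  assumes "lin T" shows "peval (pCons a p) T v = a *s v + T (peval p T v)"
proof -
  have T0: "T 0 = 0" using vec.linear_0[OF assms] .
  show ?thesis
    unfolding peval_def coeffs_pCons_eq_cCons cCons_def
    using T0 by (cases "p = 0") auto
qed

lemma peval_add:
  assumes "lin T" shows "peval (p + q) T v = peval p T v + peval q T v"
proof (induction p arbitrary: q rule: pCons_induct)
  case 0 then show ?case by simp
next
  case (pCons a p)
  show ?case
  proof (cases q rule: pCons_cases)
    case (pCons b q')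
    have "peval (pCons a p + q) T v = (a + b) *s v + T (peval p T v + peval q' T v)"
      using pCons.IH assms by (simp add: pCons peval_pCons)
    also have "\<dots> = peval (pCons a p) T v + peval q T v"
      using assms by (simp add: pCons peval_pCons vec.linear_add vector_sadd_rdistrib algebra_simps)
    finally show ?thesis .
  qed
qed

lemma peval_smult:
  assumes "lin T" shows "peval (smult c p) T v = c *s peval p T v"
proof (induction p rule: pCons_induct)
  case 0 then show ?case by simp
next
  case (pCons a p)
  then show ?case using assms
    by (simp add: peval_pCons vec.linear_scale vector_add_ldistrib)
qed

lemma peval_mult:
  assumes "lin T" shows "peval (p * q) T v = peval p T (peval q T v)"
proof (induction p rule: pCons_induct)
  case 0 then show ?case by simp
next
  case (pCons a p)
  have "peval (pCons a p * q) T v = peval (smult a q + pCons 0 (p * q)) T v"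
    by simp
  also have "\<dots> = a *s peval q T v + T (peval p T (peval q T v))"
    using assms pCons.IH by (simp add: peval_add peval_smult peval_pCons)
  also have "\<dots> = peval (pCons a p) T (peval q T v)"
    using assms by (simp add: peval_pCons)
  finally show ?case .
qed

lemma peval_diff:
  assumes "lin T" shows "peval (p - q) T v = peval p T v - peval q T v"
proof -
  have "peval (p - q) T v = peval (p + smult (-1) q) T v" by simp
  also have "\<dots> = peval p T v + (-1) *s peval q T v"
    using assms by (simp only: peval_add peval_smult)
  finally show ?thesis by (simp add: vec_eq_iff)
qed

lemma peval_linfac:
  assumes "lin T" shows "peval [:-z, 1:] T v = T v - z *s v"
  using assms vec.linear_0[OF assms] by (simp add: peval_pCons)

lemma peval_const:
  assumes "lin T" shows "peval [:c:] T v = c *s v"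
  using assms vec.linear_0[OF assms] by (simp add: peval_pCons)

lemma peval_monom:
  assumes "lin T" shows "peval (monom c k) T v = c *s (T ^^ k) v"
proof (induction k)
  case 0 then show ?case using assms by (simp add: monom_0 peval_const)
next
  case (Suc k) then show ?case using assms
    by (simp add: monom_Suc peval_pCons vec.linear_scale)
qed

lemma peval_sum:
  assumes "lin T" "finite A" shows "peval (\<Sum>i\<in>A. p i) T v = (\<Sum>i\<in>A. peval (p i) T v)"
  using assms(2) by (induction A rule: finite_induct) (simp_all add: peval_add assms(1))

lemma peval_in:
  assumes "lin T" "vec.subspace S" "\<And>x. x \<in> S \<Longrightarrow> T x \<in> S" "v \<in> S"
  shows "peval p T v \<in> S"
proof (induction p rule: pCons_induct)
  case 0 then show ?case using assms(2) vec.subspace_0 by simp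
next
  case (pCons a p)
  then show ?case using assms
    by (simp add: peval_pCons vec.subspace_add vec.subspace_scale)
qed

lemma eigen_from_poly:
  assumes T: "lin T" and S: "vec.subspace S" and TS: "\<And>x. x \<in> S \<Longrightarrow> T x \<in> S"
  shows "v \<in> S \<Longrightarrow> v \<noteq> 0 \<Longrightarrow> p \<noteq> 0 \<Longrightarrow> peval p T v = 0 \<Longrightarrow>
    \<exists>x\<in>S. x \<noteq> 0 \<and> (\<exists>c. T x = c *s x)"
proof (induction "degree p" arbitrary: p v rule: less_induct)
  case less
  show ?case
  proof (cases "degree p = 0")
    case True
    then obtain c where "p = [:c:]" by (metis degree_eq_zeroE)
    then have "c \<noteq> 0" "c *s v = 0" using less.prems T by (auto simp: peval_const)
    then show ?thesis using less.prems by simp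
  next
    case False
    then have "\<not> constant (poly p)" by (simp add: constant_degree)
    then obtain z where "poly p z = 0" using fundamental_theorem_of_algebra by blast
    then have "[:-z, 1:] dvd p" using poly_eq_0_iff_dvd by blast
    then obtain q where pq: "p = [:-z, 1:] * q" by (rule dvdE)
    then have q0: "q \<noteq> 0" using less.prems by auto
    have "degree ([:-z, 1:] * q) = degree [:-z, 1:] + degree q"
      by (rule degree_mult_eq) (use q0 in auto)
    then have "degree p = 1 + degree q" unfolding pq by simp
    then have dq: "degree q < degree p" by simp
    define u where "u = peval q T v"
    have uS: "u \<in> S" unfolding u_def using peval_in[OF T S TS less.prems(1)] .
    have "peval p T v = peval [:-z, 1:] T (peval q T v)" unfolding pq by (rule peval_mult[OF T])
    then have "T u - z *s u = 0" using less.prems T by (simp add: peval_linfac u_def)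
    then have Tu: "T u = z *s u" by simp
    show ?thesis
    proof (cases "u = 0")
      case True
      then show ?thesis using less.hyps[OF dq less.prems(1,2) q0] u_def by simp
    next
      case False
      then show ?thesis using uS Tu by blast
    qed
  qed
qed

lemma span_powers_explicit:
  assumes T: "lin T"
  shows "y \<in> vec.span ((\<lambda>k. (T ^^ k) v) ` {..<m}) \<Longrightarrow> \<exists>c. y = (\<Sum>k<m. c k *s (T ^^ k) v)"
proof -
  let ?U = "{y. \<exists>c. y = (\<Sum>k<m. c k *s (T ^^ k) v)}"
  have sub: "vec.subspace ?U"
    unfolding vec.subspace_def
  proof (intro conjI ballI allI)
    show "0 \<in> ?U" by (rule CollectI, rule exI[of _ "\<lambda>_. 0"]) simp
  next
    fix x y assume "x \<in> ?U" "y \<in> ?U"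
    then obtain c d where "x = (\<Sum>k<m. c k *s (T ^^ k) v)" "y = (\<Sum>k<m. d k *s (T ^^ k) v)" by auto
    then have "x + y = (\<Sum>k<m. (c k + d k) *s (T ^^ k) v)"
      by (simp add: sum.distrib vector_sadd_rdistrib)
    then show "x + y \<in> ?U" by (auto intro!: exI[of _ "\<lambda>k. c k + d k"])
  next
    fix a x assume "x \<in> ?U"
    then obtain c where "x = (\<Sum>k<m. c k *s (T ^^ k) v)" by auto
    then have "a *s x = (\<Sum>k<m. (a * c k) *s (T ^^ k) v)"
      by (simp add: vec.scale_sum_right)
    then show "a *s x \<in> ?U" by (auto intro!: exI[of _ "\<lambda>k. a * c k"])
  qed
  have "(\<lambda>k. (T ^^ k) v) ` {..<m} \<subseteq> ?U"
  proof
    fix y assume "y \<in> (\<lambda>k. (T ^^ k) v) ` {..<m}"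
    then obtain j where j: "j < m" "y = (T ^^ j) v" by auto
    have "y = (\<Sum>k<m. (if k = j then 1 else 0) *s (T ^^ k) v)"
      using j by (simp add: if_distrib[of "\<lambda>c. c *s _"] sum.delta cong: if_cong)
    then show "y \<in> ?U" by (auto intro!: exI[of _ "\<lambda>k. if k = j then 1 else 0"])
  qed
  then have "vec.span ((\<lambda>k. (T ^^ k) v) ` {..<m}) \<subseteq> ?U"
    using vec.span_minimal sub by blast
  then show "y \<in> vec.span ((\<lambda>k. (T ^^ k) v) ` {..<m}) \<Longrightarrow> \<exists>c. y = (\<Sum>k<m. c k *s (T ^^ k) v)"
    by blast
qed

lemma powers_dependent:
  fixes T :: "'n::finite cvec \<Rightarrow> 'n cvec"
  shows "\<exists>m. (T ^^ m) v \<in> vec.span ((\<lambda>k. (T ^^ k) v) ` {..<m})"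
proof (rule ccontr)
  assume H: "\<not> ?thesis"
  have ind: "vec.independent ((\<lambda>k. (T ^^ k) v) ` {..<N}) \<and> card ((\<lambda>k. (T ^^ k) v) ` {..<N}) = N" for N
  proof (induction N)
    case 0 then show ?case by (simp add: vec.independent_empty)
  next
    case (Suc N)
    have img: "(\<lambda>k. (T ^^ k) v) ` {..<Suc N} = insert ((T ^^ N) v) ((\<lambda>k. (T ^^ k) v) ` {..<N})"
      by (simp only: lessThan_Suc image_insert)
    have ns: "(T ^^ N) v \<notin> vec.span ((\<lambda>k. (T ^^ k) v) ` {..<N})" using H by blast
    then have nin: "(T ^^ N) v \<notin> (\<lambda>k. (T ^^ k) v) ` {..<N}" 
      by (auto intro: vec.span_base)
    have fin: "finite ((\<lambda>k. (T ^^ k) v) ` {..<N})" by simp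
    have "vec.independent (insert ((T ^^ N) v) ((\<lambda>k. (T ^^ k) v) ` {..<N}))"
      using vec.independent_insertI[OF ns] Suc.IH by blast
    moreover have "card (insert ((T ^^ N) v) ((\<lambda>k. (T ^^ k) v) ` {..<N})) = Suc N"
      using card_insert_disjoint[OF fin nin] Suc.IH by simp
    ultimately show ?case unfolding img by blast
  qed
  define N where "N = Suc (vec.dim (UNIV :: 'n cvec set))"
  have "card ((\<lambda>k. (T ^^ k) v) ` {..<N}) \<le> vec.dim (UNIV :: 'n cvec set)"
    using vec.independent_card_le_dim[of "(\<lambda>k. (T ^^ k) v) ` {..<N}" UNIV] ind[of N] by blast
  then show False using ind[of N] unfolding N_def by simp
qed

lemma eigen_exists:
  assumes T: "lin T" and S: "vec.subspace S" and TS: "\<And>x. x \<in> S \<Longrightarrow> T x \<in> S"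
    and v: "v \<in> S" "v \<noteq> 0"
  shows "\<exists>x\<in>S. x \<noteq> 0 \<and> (\<exists>c. T x = c *s x)"
proof -
  obtain m where "(T ^^ m) v \<in> vec.span ((\<lambda>k. (T ^^ k) v) ` {..<m})"
    using powers_dependent by blast
  then obtain c where c: "(T ^^ m) v = (\<Sum>k<m. c k *s (T ^^ k) v)"
    using span_powers_explicit[OF T] by blast
  define p where "p = monom 1 m - (\<Sum>k<m. monom (c k) k)"
  have "coeff p m = 1" unfolding p_def by (simp add: coeff_sum coeff_monom)
  then have p0: "p \<noteq> 0" by auto
  have "peval p T v = (T ^^ m) v - (\<Sum>k<m. c k *s (T ^^ k) v)"
    unfolding p_def using T by (simp add: peval_diff peval_sum peval_monom)
  then have "peval p T v = 0" using c by simp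
  then show ?thesis using eigen_from_poly[OF T S TS v p0] by blast
qed

lemma lin_funpow: "lin T \<Longrightarrow> lin (T ^^ k)"
proof (induction k)
  case 0 then show ?case using vec.linear_id by (simp add: id_def)
next
  case (Suc k) then show ?case
    using Vector_Spaces.linear_compose[of "(*s)" "(*s)" "T ^^ k" "(*s)" T] by (simp only: funpow.simps(2))
qed

lemma inj_dim_le:
  assumes f: "lin f" and A: "vec.subspace A" and inj: "inj_on f A" and fAB: "f ` A \<subseteq> B"
  shows "vec.dim A \<le> vec.dim B"
proof -
  have sA: "vec.span A = A" using vec.span_subspace[OF subset_refl vec.span_superset A] .
  have "inj_on f (vec.span A)" unfolding sA by (rule inj)
  then have "vec.dim (f ` A) = vec.dim A" using vec.dim_image_eq[OF f] by blast
  then show ?thesis using vec.dim_subset[OF fAB] by simp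
qed

locale sl2h =
  fixes E F Hh sg :: "'n::finite cvec \<Rightarrow> 'n cvec" and H :: "'n cvec \<Rightarrow> 'n cvec \<Rightarrow> complex"
  assumes linE: "lin E" and linF: "lin F" and linH: "lin Hh" and linS: "lin sg"
  and HE: "\<And>x. Hh (E x) - E (Hh x) = 2 *s E x"
  and HF: "\<And>x. Hh (F x) - F (Hh x) = - (2 *s F x)"
  and EF: "\<And>x. E (F x) - F (E x) = Hh x"
  and ss: "\<And>x. sg (sg x) = x"
  and sE: "\<And>x. sg (E x) = - E (sg x)"
  and sF: "\<And>x. sg (F x) = - F (sg x)"
  and sH: "\<And>x. sg (Hh x) = Hh (sg x)"
  and Hadd1: "\<And>x y z. H (x + y) z = H x z + H y z"
  and Hscale1: "\<And>c x z. H (c *s x) z = c * H x z"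
  and Hadd2: "\<And>x y z. H z (x + y) = H z x + H z y"
  and Hscale2: "\<And>c x z. H z (c *s x) = cnj c * H z x"
  and Hpos: "\<And>x. x \<noteq> 0 \<Longrightarrow> Re (H x x) > 0"
  and adjE: "\<And>x y. H (E x) y = H x (F y)"
  and adjF: "\<And>x y. H (F x) y = H x (E y)"
  and adjH: "\<And>x y. H (Hh x) y = H x (Hh y)"
begin

definition G :: "complex \<Rightarrow> 'n cvec set" where "G c = {x. Hh x = c *s x}"
definition hp :: "'n cvec set \<Rightarrow> nat" where "hp S = vec.dim (S \<inter> {x. sg x = x})"
definition hm :: "'n cvec set \<Rightarrow> nat" where "hm S = vec.dim (S \<inter> {x. sg x = - x})"
definition sgst :: "'n cvec set \<Rightarrow> bool" where "sgst S \<longleftrightarrow> (\<forall>x\<in>S. sg x \<in> S)"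

lemma H01[simp]: "H 0 y = 0"
  using Hscale1[of 0 0 y] by simp
lemma H02[simp]: "H y 0 = 0"
  using Hscale2[of y 0 0] by simp
lemma Hneg1: "H (- x) y = - H x y"
  using Hscale1[of "-1" x y] by (simp add: vector_sneg_minus1[symmetric])
lemma Hneg2: "H y (- x) = - H y x"
  using Hscale2[of y "-1" x] by (simp add: vector_sneg_minus1[symmetric])
lemma Hdiff1: "H (x - z) y = H x y - H z y"
  using Hadd1[of x "- z" y] Hneg1[of z y] by simp
lemma Hdiff2: "H y (x - z) = H y x - H y z"
  using Hadd2[of y x "- z"] Hneg2[of y z] by simp
lemma Hsum1: "finite A \<Longrightarrow> H (\<Sum>i\<in>A. f i) y = (\<Sum>i\<in>A. H (f i) y)"
  by (induction A rule: finite_induct) (simp_all add: Hadd1)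

lemma Hzero: "H x x = 0 \<Longrightarrow> x = 0"
  using Hpos[of x] by force

lemma Hnonneg: "Re (H x x) \<ge> 0"
  using Hpos[of x] by (cases "x = 0") auto

lemma lin_E_props: "E 0 = 0" "F 0 = 0" "Hh 0 = 0" "sg 0 = 0"
  using vec.linear_0[OF linE] vec.linear_0[OF linF] vec.linear_0[OF linH] vec.linear_0[OF linS] by auto

lemma eig_real:
  assumes "x \<noteq> 0" "Hh x = c *s x" shows "cnj c = c"
proof -
  have e1: "H (Hh x) x = c * H x x" using assms(2) Hscale1 by simp
  have e2: "H x (Hh x) = cnj c * H x x" using assms(2) Hscale2 by simp
  from adjH[of x x] have "c * H x x = cnj c * H x x" unfolding e1 e2 .
  moreover have "H x x \<noteq> 0" using Hpos[OF assms(1)] by auto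
  ultimately show ?thesis by simp
qed

lemma eig_orth:
  assumes "Hh x = a *s x" "Hh y = b *s y" "a \<noteq> b" shows "H x y = 0"
proof (cases "y = 0")
  case True then show ?thesis by simp
next
  case False
  have bb: "cnj b = b" using eig_real[OF False assms(2)] .
  have e1: "H (Hh x) y = a * H x y" using assms(1) Hscale1 by simp
  have e2: "H x (Hh y) = b * H x y" using assms(2) Hscale2 bb by simp
  from adjH[of x y] have "a * H x y = b * H x y" unfolding e1 e2 .
  then show ?thesis using assms(3) by simp
qed

lemma orth_indep:
  assumes fin: "finite L" and v: "\<And>c. c \<in> L \<Longrightarrow> v c \<noteq> 0 \<and> Hh (v c) = c *s v c"
  shows "card L \<le> vec.dim (UNIV :: 'n cvec set)"
proof -
  have inj: "inj_on v L"
  proof (rule inj_onI)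
    fix a b assume ab: "a \<in> L" "b \<in> L" "v a = v b"
    show "a = b"
    proof (rule ccontr)
      assume "a \<noteq> b"
      then have "H (v a) (v b) = 0" using eig_orth v ab by blast
      then show False using ab(3) v[OF ab(1)] Hzero by auto
    qed
  qed
  have ind: "vec.independent (v ` L)"
    unfolding vec.independent_explicit
  proof (intro conjI allI impI ballI)
    show "finite (v ` L)" using fin by simp
  next
    fix c :: "'n cvec \<Rightarrow> complex" and w assume sum0: "(\<Sum>u\<in>v ` L. c u *s u) = 0" and w: "w \<in> v ` L"
    then obtain a where a: "a \<in> L" "w = v a" by auto
    have "0 = H (\<Sum>u\<in>v ` L. c u *s u) w" using sum0 by simp
    also have "\<dots> = (\<Sum>u\<in>v ` L. c u * H u w)" using fin by (simp add: Hsum1 Hscale1)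
    also have "\<dots> = c w * H w w + (\<Sum>u\<in>v ` L - {w}. c u * H u w)"
      using sum.remove[of "v ` L" w] fin w by simp
    also have "\<dots> = c w * H w w"
    proof -
      have "(\<Sum>u\<in>v ` L - {w}. c u * H u w) = 0"
      proof (rule sum.neutral, rule ballI)
        fix u assume "u \<in> v ` L - {w}"
        then obtain b where b: "b \<in> L" "u = v b" "v b \<noteq> v a" using a by auto
        then have "b \<noteq> a" by auto
        then have "H u w = 0" using eig_orth v a b by metis
        then show "c u * H u w = 0" by simp
      qed
      then show ?thesis by simp
    qed
    finally have "c w * H w w = 0" by simp
    moreover have "H w w \<noteq> 0" using Hzero v[OF a(1)] a(2) by auto
    ultimately show "c w = 0" by simp
  qed
  have "card (v ` L) \<le> vec.dim (UNIV :: 'n cvec set)"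
    using vec.independent_card_le_dim[OF _ ind] by blast
  then show ?thesis using card_image[OF inj] by simp
qed

end

context sl2h
begin

lemma HF': "Hh (F x) = F (Hh x) - 2 *s F x"
  using HF[of x] by (simp add: algebra_simps)
lemma HE': "Hh (E x) = E (Hh x) + 2 *s E x"
  using HE[of x] by (simp add: algebra_simps)
lemma EF': "E (F x) = F (E x) + Hh x"
  using EF[of x] by (simp add: algebra_simps)

lemma F_scale: "F (c *s x) = c *s F x" using vec.linear_scale[OF linF] .
lemma E_scale: "E (c *s x) = c *s E x" using vec.linear_scale[OF linE] .
lemma H_scale: "Hh (c *s x) = c *s Hh x" using vec.linear_scale[OF linH] .

lemma HFk: "Hh x = c *s x \<Longrightarrow> Hh ((F ^^ k) x) = (c - 2 * of_nat k) *s (F ^^ k) x"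
proof (induction k)
  case 0 then show ?case by simp
next
  case (Suc k)
  have ih: "Hh ((F ^^ k) x) = (c - 2 * of_nat k) *s (F ^^ k) x" using Suc by simp
  have "Hh ((F ^^ Suc k) x) = F (Hh ((F ^^ k) x)) - 2 *s F ((F ^^ k) x)"
    by (simp add: HF')
  also have "\<dots> = (c - 2 * of_nat k) *s F ((F ^^ k) x) - 2 *s F ((F ^^ k) x)"
    by (simp only: ih F_scale)
  also have "\<dots> = (c - 2 * of_nat (Suc k)) *s (F ^^ Suc k) x"
    by (simp add: vec_eq_iff algebra_simps)
  finally show ?case .
qed

definition hw :: "complex \<Rightarrow> 'n cvec set" where "hw c = {x. E x = 0 \<and> Hh x = c *s x}"

lemma EFk:
  assumes "E v = 0" "Hh v = c *s v"
  shows "E ((F ^^ Suc k) v) = (of_nat (Suc k) * (c - of_nat k)) *s (F ^^ k) v"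
proof (induction k)
  case 0 then show ?case using assms by (simp add: EF' lin_E_props)
next
  case (Suc k)
  have "E ((F ^^ Suc (Suc k)) v) = F (E ((F ^^ Suc k) v)) + Hh ((F ^^ Suc k) v)"
    by (simp add: EF')
  also have "\<dots> = (of_nat (Suc k) * (c - of_nat k)) *s (F ^^ Suc k) v
      + (c - 2 * of_nat (Suc k)) *s (F ^^ Suc k) v"
    using Suc HFk[OF assms(2), of "Suc k"] by (simp add: F_scale)
  also have "\<dots> = (of_nat (Suc k) * (c - of_nat k) + (c - 2 * of_nat (Suc k))) *s (F ^^ Suc k) v"
    by (simp only: vector_sadd_rdistrib)
  also have "of_nat (Suc k) * (c - of_nat k) + (c - 2 * of_nat (Suc k)) = of_nat (Suc (Suc k)) * (c - of_nat (Suc k))"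
    by (simp add: algebra_simps)
  finally show ?case .
qed

lemma norm_id:
  assumes "Hh x = c *s x" "cnj c = c"
  shows "H (F x) (F x) = H (E x) (E x) + c * H x x"
proof -
  have "H (F x) (F x) = H x (E (F x))" by (rule adjF)
  also have "\<dots> = H x (F (E x)) + H x (Hh x)" by (simp add: EF' Hadd2)
  also have "\<dots> = H (E x) (E x) + c * H x x" using assms by (simp add: adjE Hscale2)
  finally show ?thesis .
qed

lemma F_inj_pos:
  assumes "Hh x = of_int j *s x" "j > 0" "F x = 0" shows "x = 0"
proof (rule ccontr)
  assume x0: "x \<noteq> 0"
  have "H (F x) (F x) = H (E x) (E x) + of_int j * H x x" using norm_id[OF assms(1)] by simp
  then have "H (E x) (E x) + of_int j * H x x = 0" using assms(3) by simp
  then have "Re (H (E x) (E x) + of_int j * H x x) = 0" by simp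
  then have "0 = Re (H (E x) (E x)) + of_int j * Re (H x x)" by simp
  moreover have "Re (H (E x) (E x)) \<ge> 0" by (rule Hnonneg)
  moreover have "of_int j * Re (H x x) > 0" using Hpos[OF x0] assms(2) by simp
  ultimately show False by linarith
qed

lemma E_ker_neg:
  assumes "Hh x = of_int j *s x" "j < 0" "E x = 0" shows "x = 0"
proof (rule ccontr)
  assume x0: "x \<noteq> 0"
  have "H (F x) (F x) = H (E x) (E x) + of_int j * H x x" using norm_id[OF assms(1)] by simp
  then have "H (F x) (F x) = of_int j * H x x" using assms(3) by simp
  then have "Re (H (F x) (F x)) = Re (of_int j * H x x)" by simp
  then have "Re (H (F x) (F x)) = of_int j * Re (H x x)" by simp
  moreover have "Re (H (F x) (F x)) \<ge> 0" by (rule Hnonneg)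
  moreover have "of_int j * Re (H x x) < 0" using Hpos[OF x0] assms(2) by (simp add: mult_neg_pos)
  ultimately show False by linarith
qed

lemma hw_zero_F:
  assumes "E x = 0" "Hh x = 0" shows "F x = 0"
proof -
  have "H (F x) (F x) = H (E x) (E x) + 0 * H x x" using norm_id[of x 0] assms by simp
  then have "H (F x) (F x) = 0" using assms by simp
  then show ?thesis by (rule Hzero)
qed

lemma no_infinite_eigs:
  fixes f :: "nat \<Rightarrow> complex"
  assumes inj: "inj f" and ev: "\<And>k. \<exists>x. x \<noteq> 0 \<and> Hh x = f k *s x"
  shows False
proof -
  let ?d = "vec.dim (UNIV :: 'n cvec set)"
  let ?L = "f ` {..?d}"
  have "\<forall>c\<in>?L. \<exists>x. x \<noteq> 0 \<and> Hh x = c *s x" using ev by blast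
  then obtain v where v: "\<And>c. c \<in> ?L \<Longrightarrow> v c \<noteq> 0 \<and> Hh (v c) = c *s v c" by metis
  have "card ?L \<le> ?d" using orth_indep[of ?L v] v by simp
  moreover have "card ?L = Suc ?d" using inj by (simp add: card_image inj_on_subset)
  ultimately show False by simp
qed

lemma F_nonzero_gen:
  assumes "v \<in> hw c" "v \<noteq> 0" "\<forall>i<k. c \<noteq> of_nat i"
  shows "(F ^^ k) v \<noteq> 0"
  using assms(3)
proof (induction k)
  case 0 then show ?case using assms(2) by simp
next
  case (Suc k)
  have IH: "(F ^^ k) v \<noteq> 0" using Suc by simp
  have ck: "c \<noteq> of_nat k" using Suc.prems by simp
  show ?case
  proof
    assume "(F ^^ Suc k) v = 0"
    then have "(of_nat (Suc k) * (c - of_nat k)) *s (F ^^ k) v = 0"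
      using EFk[of v c k] assms(1) lin_E_props by (simp add: hw_def)
    moreover have "of_nat (Suc k) * (c - of_nat k) \<noteq> (0::complex)"
      using ck of_nat_neq_0[of k, where 'a=complex] by (simp only: mult_eq_0_iff right_minus_eq) blast
    ultimately show False using IH by simp
  qed
qed

lemma hw_nat:
  assumes "v \<in> hw c" "v \<noteq> 0"
  shows "\<exists>j. c = of_nat j \<and> j < vec.dim (UNIV :: 'n cvec set)"
proof -
  have Hv: "Hh v = c *s v" using assms(1) by (simp add: hw_def)
  have "\<exists>j. c = of_nat j"
  proof (rule ccontr)
    assume "\<not> ?thesis"
    then have nz: "(F ^^ k) v \<noteq> 0" for k using F_nonzero_gen[OF assms] by metis
    have "inj (\<lambda>k::nat. c - 2 * of_nat k)" by (rule injI) simp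
    moreover have "\<exists>x. x \<noteq> 0 \<and> Hh x = (c - 2 * of_nat k) *s x" for k
      using nz[of k] HFk[OF Hv, of k] by blast
    ultimately show False using no_infinite_eigs by blast
  qed
  then obtain j where j: "c = of_nat j" by blast
  let ?L = "(\<lambda>k::nat. c - 2 * of_nat k) ` {..j}"
  have "\<forall>l\<in>?L. \<exists>x. x \<noteq> 0 \<and> Hh x = l *s x"
  proof
    fix l assume "l \<in> ?L"
    then obtain k where k: "k \<le> j" "l = c - 2 * of_nat k" by auto
    have "\<forall>i<k. c \<noteq> of_nat i" using j k(1) by simp
    then have "(F ^^ k) v \<noteq> 0" using F_nonzero_gen[OF assms] by blast
    then show "\<exists>x. x \<noteq> 0 \<and> Hh x = l *s x" using HFk[OF Hv, of k] k by blast
  qed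
  then obtain w where w: "\<And>l. l \<in> ?L \<Longrightarrow> w l \<noteq> 0 \<and> Hh (w l) = l *s w l" by metis
  have "card ?L \<le> vec.dim (UNIV :: 'n cvec set)" using orth_indep[of ?L w] w by simp
  moreover have "inj_on (\<lambda>k::nat. c - 2 * of_nat k) {..j}" by (rule inj_onI) simp
  then have "card ?L = Suc j" by (simp add: card_image)
  ultimately show ?thesis using j by auto
qed

lemma F_nonzero:
  assumes "v \<in> hw (of_nat j)" "v \<noteq> 0" "k \<le> j"
  shows "(F ^^ k) v \<noteq> 0"
  using F_nonzero_gen[OF assms(1,2), of k] assms(3) by simp

lemma F_top:
  assumes "v \<in> hw (of_nat j)"
  shows "(F ^^ Suc j) v = 0"
proof -
  have Ev: "E v = 0" "Hh v = of_nat j *s v" using assms by (auto simp: hw_def)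
  have "H ((F ^^ Suc j) v) ((F ^^ Suc j) v) = H ((F ^^ j) v) (E ((F ^^ Suc j) v))"
    by (simp add: adjF)
  also have "\<dots> = 0" using EFk[OF Ev, of j] by simp
  finally show ?thesis by (rule Hzero)
qed

end

lemma (in sl2h) mirror: "sl2h F E (\<lambda>x. - Hh x) sg H"
proof (rule sl2h.intro)
  show "lin F" by (rule linF)
  show "lin E" by (rule linE)
  show "lin (\<lambda>x. - Hh x)"
    using vec.linear_compose_neg[OF linH] by simp
  show "lin sg" by (rule linS)
  show "- Hh (F x) - F (- Hh x) = 2 *s F x" for x
    using HF[of x] vec.linear_neg[OF linF] by (simp add: algebra_simps)
  show "- Hh (E x) - E (- Hh x) = - (2 *s E x)" for x
    using HE[of x] vec.linear_neg[OF linE] by (simp add: algebra_simps)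
  show "F (E x) - E (F x) = - Hh x" for x
    using EF[of x] by (simp add: algebra_simps)
  show "sg (sg x) = x" for x by (rule ss)
  show "sg (F x) = - F (sg x)" for x by (rule sF)
  show "sg (E x) = - E (sg x)" for x by (rule sE)
  show "sg (- Hh x) = - Hh (sg x)" for x using sH vec.linear_neg[OF linS] by simp
  show "H (x + y) z = H x z + H y z" for x y z by (rule Hadd1)
  show "H (c *s x) z = c * H x z" for c x z by (rule Hscale1)
  show "H z (x + y) = H z x + H z y" for x y z by (rule Hadd2)
  show "H z (c *s x) = cnj c * H z x" for c x z by (rule Hscale2)
  show "x \<noteq> 0 \<Longrightarrow> 0 < Re (H x x)" for x by (rule Hpos)
  show "H (F x) y = H x (E y)" for x y by (rule adjF)
  show "H (E x) y = H x (F y)" for x y by (rule adjE)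
  show "H (- Hh x) y = H x (- Hh y)" for x y by (simp add: Hneg1 Hneg2 adjH)
qed

context sl2h
begin


lemma eig_upper:
  assumes x0: "x \<noteq> 0" and Hx: "Hh x = c *s x"
  shows "\<exists>i::int. c = of_int i \<and> i < int (vec.dim (UNIV :: 'n cvec set))"
proof -
  interpret m: sl2h F E "\<lambda>x. - Hh x" sg H by (rule mirror)
  have mHx: "- Hh x = (- c) *s x" using Hx by (simp add: vec_eq_iff)
  have HEk: "Hh ((E ^^ k) x) = (c + 2 * of_nat k) *s (E ^^ k) x" for k
    using m.HFk[OF mHx, of k] by (simp add: vec_eq_iff algebra_simps)
  have "\<exists>k. (E ^^ k) x = 0"
  proof (rule ccontr)
    assume "\<not> ?thesis"
    then have "\<exists>y. y \<noteq> 0 \<and> Hh y = (c + 2 * of_nat k) *s y" for k using HEk by blast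
    moreover have "inj (\<lambda>k::nat. c + 2 * of_nat k)" by (rule injI) simp
    ultimately show False using no_infinite_eigs by blast
  qed
  then obtain k0 where k0: "(E ^^ k0) x = 0" "\<And>k. k < k0 \<Longrightarrow> (E ^^ k) x \<noteq> 0"
    using exists_least_iff[of "\<lambda>k. (E ^^ k) x = 0"] by blast
  have "k0 \<noteq> 0" using k0(1) x0 by (cases k0) auto
  then obtain m where m: "k0 = Suc m" by (cases k0) auto
  let ?v = "(E ^^ m) x"
  have v0: "?v \<noteq> 0" using k0(2)[of m] m by simp
  have "E ?v = 0" using k0(1) m by simp
  then have "?v \<in> hw (c + 2 * of_nat m)" using HEk[of m] by (simp add: hw_def)
  then obtain j where j: "c + 2 * of_nat m = of_nat j" "j < vec.dim (UNIV :: 'n cvec set)" using hw_nat v0 by blast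
  then have "c = of_int (int j - 2 * int m)" by (simp add: algebra_simps)
  moreover have "int j - 2 * int m < int (vec.dim (UNIV :: 'n cvec set))" using j(2) by simp
  ultimately show ?thesis by blast
qed

lemma eig_int:
  assumes x0: "x \<noteq> 0" and Hx: "Hh x = c *s x"
  shows "\<exists>i::int. c = of_int i \<and> i < int (vec.dim (UNIV :: 'n cvec set)) \<and> - int (vec.dim (UNIV :: 'n cvec set)) < i"
proof -
  interpret m: sl2h F E "\<lambda>x. - Hh x" sg H by (rule mirror)
  have mHx: "- Hh x = (- c) *s x" using Hx by (simp add: vec_eq_iff)
  obtain i where i: "c = of_int i" "i < int (vec.dim (UNIV :: 'n cvec set))" using eig_upper[OF assms] by blast
  obtain i' where i': "- c = of_int i'" "i' < int (vec.dim (UNIV :: 'n cvec set))" using m.eig_upper[OF x0 mHx] by blast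
  have "i' = - i" using i(1) i'(1) by (metis of_int_eq_iff of_int_minus)
  then show ?thesis using i i' by auto
qed

lemma subspace_G: "vec.subspace (G c)"
  unfolding vec.subspace_def G_def
  using vec.linear_add[OF linH] vec.linear_scale[OF linH] lin_E_props
  by (auto simp: vector_add_ldistrib vector_smult_assoc mult.commute)

lemma diag:
  "vec.subspace S \<Longrightarrow> (\<And>x. x \<in> S \<Longrightarrow> Hh x \<in> S) \<Longrightarrow> S \<subseteq> vec.span (\<Union>c. S \<inter> G c)"
proof (induction "vec.dim S" arbitrary: S rule: less_induct)
  case less
  show ?case
  proof (cases "S \<subseteq> {0}")
    case True
    then show ?thesis using vec.span_zero by auto
  next
    case False
    then obtain v where v: "v \<in> S" "v \<noteq> 0" by auto
    obtain u c where u: "u \<in> S" "u \<noteq> 0" "Hh u = c *s u"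
      using eigen_exists[OF linH less.prems(1) less.prems(2) v] by blast
    define S' where "S' = {x \<in> S. H x u = 0}"
    have sub': "vec.subspace S'"
      unfolding vec.subspace_def S'_def
      using less.prems(1) by (auto simp: vec.subspace_def Hadd1 Hscale1)
    have st': "Hh x \<in> S'" if "x \<in> S'" for x
    proof -
      have "H (Hh x) u = H x (Hh u)" by (rule adjH)
      also have "\<dots> = cnj c * H x u" using u(3) Hscale2 by simp
      also have "\<dots> = 0" using that by (simp add: S'_def)
      finally show ?thesis using that less.prems(2) by (simp add: S'_def)
    qed
    have "S' \<subseteq> S" by (auto simp: S'_def)
    moreover have "u \<notin> S'" using u Hzero by (auto simp: S'_def)
    ultimately have "S' \<subset> S" using u(1) by blast
    moreover have e1: "vec.span S' = S'" using vec.span_subspace[OF subset_refl vec.span_superset sub'] .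
    moreover have e2: "vec.span S = S" using vec.span_subspace[OF subset_refl vec.span_superset less.prems(1)] .
    ultimately have "vec.span S' \<subset> vec.span S" by (simp only:)
    then have "vec.dim S' < vec.dim S" by (rule vec.dim_psubset)
    then have IH: "S' \<subseteq> vec.span (\<Union>c. S' \<inter> G c)" using less.hyps sub' st' by blast
    have mono: "vec.span (\<Union>c. S' \<inter> G c) \<subseteq> vec.span (\<Union>c. S \<inter> G c)"
      by (rule vec.span_mono) (auto simp: S'_def)
    have uin: "u \<in> vec.span (\<Union>c. S \<inter> G c)"
      using u by (intro vec.span_base) (auto simp: G_def)
    show ?thesis
    proof
      fix x assume x: "x \<in> S"
      define a where "a = H x u / H u u"
      have Huu: "H u u \<noteq> 0" using Hzero u(2) by auto
      have "x - a *s u \<in> S'"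
        unfolding S'_def using x u(1) less.prems(1) Huu
        by (auto simp: Hdiff1 Hscale1 a_def vec.subspace_diff vec.subspace_scale)
      then have "x - a *s u \<in> vec.span (\<Union>c. S \<inter> G c)" using IH mono by blast
      moreover have "a *s u \<in> vec.span (\<Union>c. S \<inter> G c)" using uin by (rule vec.span_scale)
      ultimately have "(x - a *s u) + a *s u \<in> vec.span (\<Union>c. S \<inter> G c)" by (rule vec.span_add)
      then show "x \<in> vec.span (\<Union>c. S \<inter> G c)" by simp
    qed
  qed
qed

lemma subspace_sgfix: "vec.subspace {x. sg x = s *s x}"
  unfolding vec.subspace_def
  using vec.linear_add[OF linS] vec.linear_scale[OF linS] lin_E_props
  by (auto simp: vector_add_ldistrib vector_smult_assoc mult.commute)

lemma split_pq:
  assumes P: "vec.subspace P" and Q: "vec.subspace Q" and sP: "sgst P" and sQ: "sgst Q"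
    and PQ: "P \<inter> Q \<subseteq> {0}" and p: "p \<in> P" and q: "q \<in> Q" and s: "sg (p + q) = s *s (p + q)"
  shows "sg p = s *s p \<and> sg q = s *s q"
proof -
  have "sg p + sg q = s *s p + s *s q" using s vec.linear_add[OF linS] by (simp add: vector_add_ldistrib)
  then have eq: "sg p - s *s p = s *s q - sg q" by (simp add: algebra_simps)
  have "sg p - s *s p \<in> P" using P p sP unfolding sgst_def by (simp add: vec.subspace_diff vec.subspace_scale)
  moreover have "s *s q - sg q \<in> Q" using Q q sQ unfolding sgst_def by (simp add: vec.subspace_diff vec.subspace_scale)
  ultimately have "sg p - s *s p = 0" using eq PQ by auto
  then show ?thesis using eq by simp
qed

lemma ssum_fix:
  assumes P: "vec.subspace P" and Q: "vec.subspace Q" and sP: "sgst P" and sQ: "sgst Q"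
    and PQ: "P \<inter> Q \<subseteq> {0}"
  shows "ssum P Q \<inter> {x. sg x = s *s x} = ssum (P \<inter> {x. sg x = s *s x}) (Q \<inter> {x. sg x = s *s x})"
proof
  show "ssum P Q \<inter> {x. sg x = s *s x} \<subseteq> ssum (P \<inter> {x. sg x = s *s x}) (Q \<inter> {x. sg x = s *s x})"
  proof
    fix x assume "x \<in> ssum P Q \<inter> {x. sg x = s *s x}"
    then obtain p q where pq: "x = p + q" "p \<in> P" "q \<in> Q" "sg (p + q) = s *s (p + q)"
      unfolding ssum_def by auto
    then have "sg p = s *s p \<and> sg q = s *s q" using split_pq[OF assms pq(2,3,4)] by blast
    then show "x \<in> ssum (P \<inter> {x. sg x = s *s x}) (Q \<inter> {x. sg x = s *s x})"
      using pq unfolding ssum_def by blast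
  qed
next
  show "ssum (P \<inter> {x. sg x = s *s x}) (Q \<inter> {x. sg x = s *s x}) \<subseteq> ssum P Q \<inter> {x. sg x = s *s x}"
    unfolding ssum_def using vec.linear_add[OF linS] by (auto simp: vector_add_ldistrib)
qed

lemma dim_fix_ssum:
  assumes P: "vec.subspace P" and Q: "vec.subspace Q" and sP: "sgst P" and sQ: "sgst Q"
    and PQ: "P \<inter> Q \<subseteq> {0}"
  shows "vec.dim (ssum P Q \<inter> {x. sg x = s *s x}) = vec.dim (P \<inter> {x. sg x = s *s x}) + vec.dim (Q \<inter> {x. sg x = s *s x})"
  unfolding ssum_fix[OF assms]
  by (rule dim_ssum) (use P Q PQ subspace_sgfix in \<open>auto intro: vec.subspace_inter\<close>)

lemma hp_ssum:
  assumes "vec.subspace P" "vec.subspace Q" "sgst P" "sgst Q" "P \<inter> Q \<subseteq> {0}"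
  shows "hp (ssum P Q) = hp P + hp Q" "hm (ssum P Q) = hm P + hm Q"
  using dim_fix_ssum[OF assms, of 1] dim_fix_ssum[OF assms, of "-1"]
  unfolding hp_def hm_def by (simp_all add: vector_sneg_minus1[symmetric])

end

context sl2h
begin

lemma sg_add: "sg (x + y) = sg x + sg y" using vec.linear_add[OF linS] .
lemma sg_diff: "sg (x - y) = sg x - sg y" using vec.linear_diff[OF linS] .
lemma sg_scale: "sg (c *s x) = c *s sg x" using vec.linear_scale[OF linS] .
lemma sg_neg: "sg (- x) = - sg x" using vec.linear_neg[OF linS] .
lemma F_add: "F (x + y) = F x + F y" using vec.linear_add[OF linF] .
lemma F_diff: "F (x - y) = F x - F y" using vec.linear_diff[OF linF] .
lemma F_neg: "F (- x) = - F x" using vec.linear_neg[OF linF] .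
lemma E_add: "E (x + y) = E x + E y" using vec.linear_add[OF linE] .
lemma E_diff: "E (x - y) = E x - E y" using vec.linear_diff[OF linE] .
lemma H_add: "Hh (x + y) = Hh x + Hh y" using vec.linear_add[OF linH] .
lemma H_diff: "Hh (x - y) = Hh x - Hh y" using vec.linear_diff[OF linH] .

lemma sgst_span: "sgst X \<Longrightarrow> sgst (vec.span X)"
proof -
  assume X: "sgst X"
  have "sg ` vec.span X = vec.span (sg ` X)" by (rule vec.linear_span_image[OF linS, symmetric])
  also have "\<dots> \<subseteq> vec.span X" using X by (intro vec.span_mono) (auto simp: sgst_def)
  finally show "sgst (vec.span X)" unfolding sgst_def by blast
qed

lemma hp_zero: "hp {0} = 0" "hm {0} = 0"
  unfolding hp_def hm_def using lin_E_props by (auto intro!: vec.dim_eq_0[THEN iffD2])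

lemma fam:
  assumes "finite L" and "\<And>c. c \<in> L \<Longrightarrow> vec.subspace (A c) \<and> A c \<subseteq> G c \<and> sgst (A c)"
  shows "hp (vec.span (\<Union>c\<in>L. A c)) = (\<Sum>c\<in>L. hp (A c)) \<and> hm (vec.span (\<Union>c\<in>L. A c)) = (\<Sum>c\<in>L. hm (A c))"
  using assms
proof (induction L rule: finite_induct)
  case empty
  then show ?case by (simp add: vec.span_empty hp_zero)
next
  case (insert a L)
  let ?U = "vec.span (\<Union>c\<in>L. A c)"
  have Aa: "vec.subspace (A a)" "A a \<subseteq> G a" "sgst (A a)" using insert.prems by auto
  have IH: "hp ?U = (\<Sum>c\<in>L. hp (A c)) \<and> hm ?U = (\<Sum>c\<in>L. hm (A c))"
    using insert.IH insert.prems by auto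
  have spanA: "vec.span (A a) = A a" using vec.span_subspace[OF subset_refl vec.span_superset Aa(1)] .
  have eq: "vec.span (\<Union>c\<in>insert a L. A c) = ssum (A a) ?U"
  proof -
    have "vec.span (\<Union>c\<in>insert a L. A c) = vec.span (A a \<union> (\<Union>c\<in>L. A c))" by simp
    also have "\<dots> = ssum (vec.span (A a)) ?U" unfolding vec.span_Un ssum_def ..
    finally show ?thesis unfolding spanA .
  qed
  have int0: "A a \<inter> ?U \<subseteq> {0}"
  proof
    fix x assume x: "x \<in> A a \<inter> ?U"
    have xG: "Hh x = a *s x" using x Aa(2) by (auto simp: G_def)
    have "?U \<subseteq> {y. H y x = 0}"
    proof (rule vec.span_minimal)
      show "(\<Union>c\<in>L. A c) \<subseteq> {y. H y x = 0}"
      proof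
        fix y assume "y \<in> (\<Union>c\<in>L. A c)"
        then obtain c where c: "c \<in> L" "y \<in> A c" by auto
        then have "Hh y = c *s y" using insert.prems by (auto simp: G_def)
        moreover have "c \<noteq> a" using c insert.hyps by auto
        ultimately show "y \<in> {y. H y x = 0}" using eig_orth xG by auto
      qed
      show "vec.subspace {y. H y x = 0}"
        unfolding vec.subspace_def by (auto simp: Hadd1 Hscale1)
    qed
    then have "H x x = 0" using x by auto
    then show "x \<in> {0}" using Hzero by simp
  qed
  have sU0: "sgst (\<Union>c\<in>L. A c)" using insert.prems unfolding sgst_def by blast
  have sU: "sgst ?U" by (rule sgst_span[OF sU0])
  have "hp (ssum (A a) ?U) = hp (A a) + hp ?U" "hm (ssum (A a) ?U) = hm (A a) + hm ?U"
    using hp_ssum[OF Aa(1) vec.subspace_span Aa(3) sU int0] by auto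
  then show ?case unfolding eq using IH insert.hyps by simp
qed

lemma rank_trick:
  assumes X: "vec.subspace X" and Y: "vec.subspace Y" and EX: "E ` X \<subseteq> Y" and FY: "F ` Y \<subseteq> X"
  shows "X = ssum (X \<inter> {x. E x = 0}) (F ` Y)" "(X \<inter> {x. E x = 0}) \<inter> F ` Y \<subseteq> {0}"
proof -
  show i1: "(X \<inter> {x. E x = 0}) \<inter> F ` Y \<subseteq> {0}"
  proof
    fix x assume "x \<in> (X \<inter> {x. E x = 0}) \<inter> F ` Y"
    then obtain y where "E x = 0" "x = F y" by auto
    then have "H x x = 0" using adjF[of y x] by simp
    then show "x \<in> {0}" using Hzero by simp
  qed
  have i2: "(Y \<inter> {x. F x = 0}) \<inter> E ` X \<subseteq> {0}"
  proof
    fix y assume "y \<in> (Y \<inter> {x. F x = 0}) \<inter> E ` X"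
    then obtain x where "F y = 0" "y = E x" by auto
    then have "H y y = 0" using adjE[of x y] by simp
    then show "y \<in> {0}" using Hzero by simp
  qed
  have sK: "vec.subspace (X \<inter> {x. E x = 0})"
    using X vec.linear_subspace_kernel[OF linE] by (rule vec.subspace_inter)
  have sK': "vec.subspace (Y \<inter> {x. F x = 0})"
    using Y vec.linear_subspace_kernel[OF linF] by (rule vec.subspace_inter)
  have sFY: "vec.subspace (F ` Y)" using vec.linear_subspace_image[OF linF Y] .
  have sEX: "vec.subspace (E ` X)" using vec.linear_subspace_image[OF linE X] .
  have rn1: "vec.dim X = vec.dim (X \<inter> {x. E x = 0}) + vec.dim (E ` X)" by (rule rank_nullity[OF linE X])
  have rn2: "vec.dim Y = vec.dim (Y \<inter> {x. F x = 0}) + vec.dim (F ` Y)" by (rule rank_nullity[OF linF Y])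
  have sub1: "ssum (X \<inter> {x. E x = 0}) (F ` Y) \<subseteq> X"
    unfolding ssum_def using FY X by (auto intro: vec.subspace_add)
  have sub2: "ssum (Y \<inter> {x. F x = 0}) (E ` X) \<subseteq> Y"
    unfolding ssum_def using EX Y by (auto intro: vec.subspace_add)
  have d1: "vec.dim (ssum (X \<inter> {x. E x = 0}) (F ` Y)) = vec.dim (X \<inter> {x. E x = 0}) + vec.dim (F ` Y)"
    by (rule dim_ssum[OF sK sFY i1])
  have d2: "vec.dim (ssum (Y \<inter> {x. F x = 0}) (E ` X)) = vec.dim (Y \<inter> {x. F x = 0}) + vec.dim (E ` X)"
    by (rule dim_ssum[OF sK' sEX i2])
  have le1: "vec.dim (ssum (X \<inter> {x. E x = 0}) (F ` Y)) \<le> vec.dim X" using vec.dim_subset[OF sub1] .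
  have le2: "vec.dim (ssum (Y \<inter> {x. F x = 0}) (E ` X)) \<le> vec.dim Y" using vec.dim_subset[OF sub2] .
  have "vec.dim (ssum (X \<inter> {x. E x = 0}) (F ` Y)) \<ge> vec.dim X"
    using rn1 rn2 d1 d2 le1 le2 by linarith
  moreover have "vec.subspace (ssum (X \<inter> {x. E x = 0}) (F ` Y))"
    unfolding ssum_def by (rule vec.subspace_sums[OF sK sFY])
  ultimately show "X = ssum (X \<inter> {x. E x = 0}) (F ` Y)"
    using vec.subspace_dim_equal[OF _ X sub1] by simp
qed

lemma dim_split:
  assumes X: "vec.subspace X" and sX: "sgst X"
  shows "vec.dim X = hp X + hm X"
proof -
  let ?P = "X \<inter> {x. sg x = x}" and ?Q = "X \<inter> {x. sg x = - x}"
  have sP: "vec.subspace ?P" using vec.subspace_inter[OF X subspace_sgfix[of 1]] by simp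
  have sQ: "vec.subspace ?Q" using vec.subspace_inter[OF X subspace_sgfix[of "-1"]]
    by (simp add: vector_sneg_minus1[symmetric])
  have i: "?P \<inter> ?Q \<subseteq> {0}"
  proof
    fix x assume "x \<in> ?P \<inter> ?Q"
    then have "x = - x" by auto
    then show "x \<in> {0}" by (simp add: vec_eq_iff)
  qed
  have "X = ssum ?P ?Q"
  proof
    show "X \<subseteq> ssum ?P ?Q"
    proof
      fix x assume x: "x \<in> X"
      define p where "p = (1/2) *s (x + sg x)"
      define q where "q = (1/2) *s (x - sg x)"
      have "x = p + q" unfolding p_def q_def by (simp add: vec_eq_iff field_simps)
      have "sg p = (1/2) *s (sg x + sg (sg x))" unfolding p_def by (simp only: sg_add sg_scale)
      then have "sg p = p" unfolding p_def by (simp add: ss algebra_simps)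
      moreover have "p \<in> X" unfolding p_def using x sX X
        by (auto simp: sgst_def vec.subspace_add vec.subspace_scale)
      ultimately have "p \<in> ?P" by simp
      have "sg q = (1/2) *s (sg x - sg (sg x))" unfolding q_def by (simp only: sg_diff sg_scale)
      then have "sg q = - q" unfolding q_def by (simp add: ss vec_eq_iff algebra_simps)
      moreover have "q \<in> X" unfolding q_def using x sX X
        by (auto simp: sgst_def vec.subspace_diff vec.subspace_scale)
      ultimately have "q \<in> ?Q" by simp
      show "x \<in> ssum ?P ?Q" unfolding ssum_def using \<open>x = p + q\<close> \<open>p \<in> ?P\<close> \<open>q \<in> ?Q\<close> by blast
    qed
    show "ssum ?P ?Q \<subseteq> X" unfolding ssum_def using X by (auto intro: vec.subspace_add)
  qed
  then have "vec.dim X = vec.dim (ssum ?P ?Q)" by simp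
  also have "\<dots> = vec.dim ?P + vec.dim ?Q" by (rule dim_ssum[OF sP sQ i])
  finally show ?thesis unfolding hp_def hm_def .
qed

lemma twist_h:
  assumes Y: "vec.subspace Y" and sY: "sgst Y"
  shows "hp (F ` Y) + hm (Y \<inter> {x. F x = 0}) = hm Y"
proof -
  let ?M = "Y \<inter> {x. sg x = - x}"
  have sM: "vec.subspace ?M" using vec.subspace_inter[OF Y subspace_sgfix[of "-1"]]
    by (simp add: vector_sneg_minus1[symmetric])
  have eq: "F ` Y \<inter> {x. sg x = x} = F ` ?M"
  proof
    show "F ` ?M \<subseteq> F ` Y \<inter> {x. sg x = x}"
      using sF vec.linear_neg[OF linF] by auto
    show "F ` Y \<inter> {x. sg x = x} \<subseteq> F ` ?M"
    proof
      fix z assume "z \<in> F ` Y \<inter> {x. sg x = x}"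
      then obtain y where y: "y \<in> Y" "z = F y" "sg (F y) = F y" by auto
      define y' where "y' = (1/2) *s (y - sg y)"
      have "F (sg y) = - z" using sF[of y] y by simp
      moreover have "F y' = (1/2) *s (F y - F (sg y))" unfolding y'_def by (simp only: F_diff F_scale)
      ultimately have "F y' = z" using y by (simp add: vec_eq_iff field_simps)
      moreover have "y' \<in> ?M"
      proof -
        have "sg y' = (1/2) *s (sg y - sg (sg y))" unfolding y'_def by (simp only: sg_diff sg_scale)
        then have "sg y' = - y'" unfolding y'_def by (simp add: ss vec_eq_iff algebra_simps)
        moreover have "y' \<in> Y" unfolding y'_def using y sY Y
          by (auto simp: sgst_def vec.subspace_diff vec.subspace_scale)
        ultimately show ?thesis by simp
      qed
      ultimately show "z \<in> F ` ?M" by blast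
    qed
  qed
  have "vec.dim ?M = vec.dim (?M \<inter> {x. F x = 0}) + vec.dim (F ` ?M)" by (rule rank_nullity[OF linF sM])
  moreover have "?M \<inter> {x. F x = 0} = (Y \<inter> {x. F x = 0}) \<inter> {x. sg x = - x}" by auto
  ultimately show ?thesis unfolding hp_def hm_def eq by simp
qed

lemma twist_m:
  assumes Y: "vec.subspace Y" and sY: "sgst Y"
  shows "hm (F ` Y) + hp (Y \<inter> {x. F x = 0}) = hp Y"
proof -
  let ?M = "Y \<inter> {x. sg x = x}"
  have sM: "vec.subspace ?M" using vec.subspace_inter[OF Y subspace_sgfix[of 1]] by simp
  have eq: "F ` Y \<inter> {x. sg x = - x} = F ` ?M"
  proof
    show "F ` ?M \<subseteq> F ` Y \<inter> {x. sg x = - x}"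
      using sF by auto
    show "F ` Y \<inter> {x. sg x = - x} \<subseteq> F ` ?M"
    proof
      fix z assume "z \<in> F ` Y \<inter> {x. sg x = - x}"
      then obtain y where y: "y \<in> Y" "z = F y" "sg (F y) = - F y" by auto
      define y' where "y' = (1/2) *s (y + sg y)"
      have "F (sg y) = z" using sF[of y] y by simp
      moreover have "F y' = (1/2) *s (F y + F (sg y))" unfolding y'_def by (simp only: F_add F_scale)
      ultimately have "F y' = z" using y by (simp add: vec_eq_iff field_simps)
      moreover have "y' \<in> ?M"
      proof -
        have "sg y' = (1/2) *s (sg y + sg (sg y))" unfolding y'_def by (simp only: sg_add sg_scale)
        then have "sg y' = y'" unfolding y'_def by (simp add: ss algebra_simps)
        moreover have "y' \<in> Y" unfolding y'_def using y sY Y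
          by (auto simp: sgst_def vec.subspace_add vec.subspace_scale)
        ultimately show ?thesis by simp
      qed
      ultimately show "z \<in> F ` ?M" by blast
    qed
  qed
  have "vec.dim ?M = vec.dim (?M \<inter> {x. F x = 0}) + vec.dim (F ` ?M)" by (rule rank_nullity[OF linF sM])
  moreover have "?M \<inter> {x. F x = 0} = (Y \<inter> {x. F x = 0}) \<inter> {x. sg x = x}" by auto
  ultimately show ?thesis unfolding hp_def hm_def eq by simp
qed

end

context sl2h
begin

definition lw :: "nat \<Rightarrow> 'n cvec set" where "lw j = {x. F x = 0 \<and> - Hh x = of_nat j *s x}"

lemma hw_G: "hw c = {x. E x = 0} \<inter> G c" by (auto simp: hw_def G_def)

lemma subspace_hw: "vec.subspace (hw c)"
  unfolding hw_G by (rule vec.subspace_inter[OF vec.linear_subspace_kernel[OF linE] subspace_G])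

lemma sgst_hw: "sgst (hw c)"
proof -
  have "sg x \<in> hw c" if x: "x \<in> hw c" for x
  proof -
    have "E (sg x) = - sg (E x)" using sE[of x] by (simp add: algebra_simps)
    then have "E (sg x) = 0" using x lin_E_props by (simp add: hw_def)
    moreover have "Hh (sg x) = c *s sg x" using x sH[of x] by (simp add: hw_def sg_scale)
    ultimately show ?thesis by (simp add: hw_def)
  qed
  then show ?thesis by (simp add: sgst_def)
qed

lemma sgst_kerE: "sgst {x. E x = 0}"
proof -
  have "E (sg x) = 0" if "E x = 0" for x
  proof -
    have "E (sg x) = - sg (E x)" using sE[of x] by (simp add: algebra_simps)
    then show ?thesis using that lin_E_props by simp
  qed
  then show ?thesis by (simp add: sgst_def)
qed

lemma sgst_kerF: "sgst {x. F x = 0}"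
proof -
  have "F (sg x) = 0" if "F x = 0" for x
  proof -
    have "F (sg x) = - sg (F x)" using sF[of x] by (simp add: algebra_simps)
    then show ?thesis using that lin_E_props by simp
  qed
  then show ?thesis by (simp add: sgst_def)
qed

lemma sgst_imF: "sgst (range F)"
proof -
  have "sg (F y) \<in> range F" for y
  proof -
    have "sg (F y) = F (- sg y)" using sF[of y] by (simp add: F_neg)
    then show ?thesis by simp
  qed
  then show ?thesis by (auto simp: sgst_def)
qed

lemma sg_Fk: "sg ((F ^^ k) x) = (-1) ^ k *s (F ^^ k) (sg x)"
proof (induction k)
  case 0 then show ?case by simp
next
  case (Suc k)
  have "sg ((F ^^ Suc k) x) = - F (sg ((F ^^ k) x))" by (simp add: sF)
  also have "\<dots> = - F ((-1) ^ k *s (F ^^ k) (sg x))" using Suc by simp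
  also have "\<dots> = (-1) ^ Suc k *s (F ^^ Suc k) (sg x)" by (simp add: F_scale vec_eq_iff)
  finally show ?case .
qed

lemma P4gen:
  "vec.dim (hw (of_nat j) \<inter> {x. sg x = s *s x}) \<le> vec.dim (lw j \<inter> {x. sg x = ((-1) ^ j * s) *s x})"
proof (rule inj_dim_le[OF lin_funpow[OF linF, of j]])
  show "vec.subspace (hw (of_nat j) \<inter> {x. sg x = s *s x})"
    by (rule vec.subspace_inter[OF subspace_hw subspace_sgfix])
  have lf: "lin (F ^^ j)" by (rule lin_funpow[OF linF])
  show "inj_on (F ^^ j) (hw (of_nat j) \<inter> {x. sg x = s *s x})"
  proof (rule inj_onI)
    fix x y assume x: "x \<in> hw (of_nat j) \<inter> {x. sg x = s *s x}" and y: "y \<in> hw (of_nat j) \<inter> {x. sg x = s *s x}"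
      and eq: "(F ^^ j) x = (F ^^ j) y"
    have "(F ^^ j) (x - y) = 0" using eq vec.linear_diff[OF lf] by simp
    moreover have "x - y \<in> hw (of_nat j)" using x y subspace_hw by (auto intro: vec.subspace_diff)
    ultimately have "x - y = 0" using F_nonzero[of "x - y" j j] by auto
    then show "x = y" by simp
  qed
  show "(F ^^ j) ` (hw (of_nat j) \<inter> {x. sg x = s *s x}) \<subseteq> lw j \<inter> {x. sg x = ((-1) ^ j * s) *s x}"
  proof
    fix z assume "z \<in> (F ^^ j) ` (hw (of_nat j) \<inter> {x. sg x = s *s x})"
    then obtain x where x: "x \<in> hw (of_nat j)" "sg x = s *s x" "z = (F ^^ j) x" by auto
    have Hx: "Hh x = of_nat j *s x" using x by (simp add: hw_def)
    have "F z = 0" using F_top[OF x(1)] x(3) by simp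
    moreover have "- Hh z = of_nat j *s z"
      using HFk[OF Hx, of j] unfolding x(3) by (simp add: vec_eq_iff algebra_simps)
    moreover have "sg z = ((-1) ^ j * s) *s z"
      using sg_Fk[of j x] x(2,3) vec.linear_scale[OF lf] by (simp add: vector_smult_assoc)
    ultimately show "z \<in> lw j \<inter> {x. sg x = ((-1) ^ j * s) *s x}" by (simp add: lw_def)
  qed
qed

lemma mirror_hw: "sl2h.hw F (\<lambda>x. - Hh x) c = {x. F x = 0 \<and> - Hh x = c *s x}"
  by (simp add: sl2h.hw_def[OF mirror])

lemma mirror_lw: "sl2h.lw E (\<lambda>x. - Hh x) j = hw (of_nat j)"
  by (simp add: sl2h.lw_def[OF mirror] hw_def)

lemma lw_as_hw: "lw j = sl2h.hw F (\<lambda>x. - Hh x) (of_nat j)"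
  by (simp add: mirror_hw lw_def)

lemma P4:
  "int (hm (lw j)) - int (hp (lw j)) = (-1) ^ j * (int (hm (hw (of_nat j))) - int (hp (hw (of_nat j))))"
proof -
  interpret m: sl2h F E "\<lambda>x. - Hh x" sg H by (rule mirror)
  have a1: "vec.dim (hw (of_nat j) \<inter> {x. sg x = s *s x}) \<le> vec.dim (lw j \<inter> {x. sg x = ((-1) ^ j * s) *s x})" for s
    by (rule P4gen)
  have a2: "vec.dim (lw j \<inter> {x. sg x = s *s x}) \<le> vec.dim (hw (of_nat j) \<inter> {x. sg x = ((-1) ^ j * s) *s x})" for s
    using m.P4gen[of j s] unfolding mirror_lw lw_as_hw .
  have m1: "{x. sg x = (-1) *s x} = {x. sg x = - x}" by (simp add: vector_sneg_minus1[symmetric])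
  show ?thesis
  proof (cases "even j")
    case True
    then have "(-1::complex) ^ j = 1" by simp
    then show ?thesis using a1[of 1] a1[of "-1"] a2[of 1] a2[of "-1"] True
      unfolding hp_def hm_def m1 by simp
  next
    case False
    then have "(-1::complex) ^ j = -1" by simp
    then show ?thesis using a1[of 1] a1[of "-1"] a2[of 1] a2[of "-1"] False
      unfolding hp_def hm_def m1 by simp
  qed
qed

end

lemma ev_split_sum:
  fixes N :: nat and f :: "nat \<Rightarrow> int"
  shows "(\<Sum>j<2*N. if even j then f j else (0::int)) = (\<Sum>k<N. f (2*k))"
proof (induction N)
  case 0 then show ?case by simp
next
  case (Suc N)
  have "2 * Suc N = Suc (Suc (2 * N))" by simp
  then show ?case using Suc by (simp add: lessThan_Suc)
qed

lemma ev_sum: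
  fixes d :: nat and t :: "nat \<Rightarrow> int"
  assumes "\<And>j. j \<ge> d \<Longrightarrow> t j = (0::int)"
  shows "(\<Sum>j<d. if even j then t j else 0) = (\<Sum>k<d. t (2*k))"
proof -
  have "(\<Sum>j<2*d. if even j then t j else 0) = (\<Sum>j<d. if even j then t j else 0)"
    by (rule sum.mono_neutral_right) (auto simp: assms)
  then show ?thesis using ev_split_sum[where N=d and f=t] by simp
qed

context sl2h
begin

lemma glob:
  "2 * (int (hm UNIV) - int (hp UNIV)) =
     (int (hm {x. E x = 0}) - int (hp {x. E x = 0})) + (int (hm {x. F x = 0}) - int (hp {x. F x = 0}))"
proof -
  have rt: "UNIV = ssum (UNIV \<inter> {x. E x = 0}) (F ` UNIV)" "(UNIV \<inter> {x. E x = 0}) \<inter> F ` UNIV \<subseteq> {0}"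
    using rank_trick[of UNIV UNIV] by auto
  have sKE: "vec.subspace {x. E x = 0}" by (rule vec.linear_subspace_kernel[OF linE])
  have sFU: "vec.subspace (range F)" by (rule vec.linear_subspace_image[OF linF vec.subspace_UNIV])
  have e: "UNIV = ssum {x. E x = 0} (range F)" "{x. E x = 0} \<inter> range F \<subseteq> {0}" using rt by auto
  have h1: "hp UNIV = hp {x. E x = 0} + hp (range F)" "hm UNIV = hm {x. E x = 0} + hm (range F)"
    using hp_ssum[OF sKE sFU sgst_kerE sgst_imF e(2)] e(1)[symmetric] by auto
  have sU: "sgst UNIV" by (simp add: sgst_def)
  have t1: "hp (range F) + hm {x. F x = 0} = hm UNIV" using twist_h[OF vec.subspace_UNIV sU] by simp
  have t2: "hm (range F) + hp {x. F x = 0} = hp UNIV" using twist_m[OF vec.subspace_UNIV sU] by simp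
  have i1: "int (hp UNIV) = int (hp {x. E x = 0}) + int (hp (range F))" using h1(1) by simp
  have i2: "int (hm UNIV) = int (hm {x. E x = 0}) + int (hm (range F))" using h1(2) by simp
  have i3: "int (hp (range F)) + int (hm {x. F x = 0}) = int (hm UNIV)" using t1 by simp
  have i4: "int (hm (range F)) + int (hp {x. F x = 0}) = int (hp UNIV)" using t2 by simp
  show ?thesis using i1 i2 i3 i4 by (simp add: algebra_simps)
qed

lemma hw_small: "j \<ge> vec.dim (UNIV :: 'n cvec set) \<Longrightarrow> hw (of_nat j) \<subseteq> {0}"
  using hw_nat by fastforce

lemma hp_small: "S \<subseteq> {0} \<Longrightarrow> hp S = 0 \<and> hm S = 0"
  unfolding hp_def hm_def by (auto intro!: vec.dim_eq_0[THEN iffD2])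

lemma hwG: "hw c \<subseteq> G c" by (auto simp: hw_def G_def)

lemma kerE_sum:
  "hp {x. E x = 0} = (\<Sum>j<vec.dim (UNIV :: 'n cvec set). hp (hw (of_nat j))) \<and>
   hm {x. E x = 0} = (\<Sum>j<vec.dim (UNIV :: 'n cvec set). hm (hw (of_nat j)))"
proof -
  let ?d = "vec.dim (UNIV :: 'n cvec set)"
  let ?L = "(of_nat :: nat \<Rightarrow> complex) ` {..<?d}"
  let ?K = "{x. E x = 0}"
  have sK: "vec.subspace ?K" by (rule vec.linear_subspace_kernel[OF linE])
  have stK: "Hh x \<in> ?K" if "x \<in> ?K" for x
    using that HE'[of x] lin_E_props by (simp add: E_scale)
  have d: "?K \<subseteq> vec.span (\<Union>c. ?K \<inter> G c)" by (rule diag[OF sK stK]) simp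
  have "(\<Union>c. ?K \<inter> G c) \<subseteq> vec.span (\<Union>c\<in>?L. hw c)"
  proof
    fix x assume "x \<in> (\<Union>c. ?K \<inter> G c)"
    then obtain c where c: "x \<in> hw c" unfolding hw_G by auto
    show "x \<in> vec.span (\<Union>c\<in>?L. hw c)"
    proof (cases "x = 0")
      case True then show ?thesis by (simp add: vec.span_zero)
    next
      case False
      then obtain j where "c = of_nat j" "j < ?d" using hw_nat c by blast
      then have "c \<in> ?L" by auto
      then show ?thesis using c by (blast intro: vec.span_base)
    qed
  qed
  then have "vec.span (\<Union>c. ?K \<inter> G c) \<subseteq> vec.span (\<Union>c\<in>?L. hw c)"
    using vec.span_mono[of "\<Union>c. ?K \<inter> G c" "vec.span (\<Union>c\<in>?L. hw c)"] by (simp add: vec.span_span)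
  moreover have "vec.span (\<Union>c\<in>?L. hw c) \<subseteq> ?K"
    by (rule vec.span_minimal[OF _ sK]) (auto simp: hw_def)
  ultimately have KL: "?K = vec.span (\<Union>c\<in>?L. hw c)" using d by blast
  have f: "hp (vec.span (\<Union>c\<in>?L. hw c)) = (\<Sum>c\<in>?L. hp (hw c)) \<and> hm (vec.span (\<Union>c\<in>?L. hw c)) = (\<Sum>c\<in>?L. hm (hw c))"
    using hwG by (intro fam) (simp_all add: subspace_hw sgst_hw)
  have inj: "inj_on (of_nat :: nat \<Rightarrow> complex) {..<?d}" by (rule inj_onI) simp
  show ?thesis using f KL[symmetric] sum.reindex[OF inj, of "\<lambda>c. hp (hw c)"] sum.reindex[OF inj, of "\<lambda>c. hm (hw c)"]
    by simp
qed

lemma main_sd: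
  "int (hm UNIV) - int (hp UNIV) =
   (\<Sum>k<vec.dim (UNIV :: 'n cvec set). int (hm (hw (of_nat (2*k)))) - int (hp (hw (of_nat (2*k)))))"
proof -
  interpret m: sl2h F E "\<lambda>x. - Hh x" sg H by (rule mirror)
  let ?d = "vec.dim (UNIV :: 'n cvec set)"
  define t where "t j = int (hm (hw (of_nat j))) - int (hp (hw (of_nat j)))" for j
  have kE: "int (hm {x. E x = 0}) - int (hp {x. E x = 0}) = (\<Sum>j<?d. t j)"
    using kerE_sum by (simp add: t_def sum_subtractf of_nat_sum)
  have kF0: "hp {x. F x = 0} = (\<Sum>j<?d. hp (lw j)) \<and> hm {x. F x = 0} = (\<Sum>j<?d. hm (lw j))"
    using m.kerE_sum unfolding lw_as_hw .
  have "int (hm {x. F x = 0}) - int (hp {x. F x = 0}) = (\<Sum>j<?d. int (hm (lw j)) - int (hp (lw j)))"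
    using kF0 by (simp add: sum_subtractf of_nat_sum)
  also have "\<dots> = (\<Sum>j<?d. (-1) ^ j * t j)" using P4 by (simp add: t_def)
  finally have kF: "int (hm {x. F x = 0}) - int (hp {x. F x = 0}) = (\<Sum>j<?d. (-1) ^ j * t j)" .
  have "2 * (int (hm UNIV) - int (hp UNIV)) = (\<Sum>j<?d. t j + (-1) ^ j * t j)"
    using glob kE kF by (simp add: sum.distrib)
  also have "\<dots> = (\<Sum>j<?d. 2 * (if even j then t j else 0))"
    by (rule sum.cong) auto
  also have "\<dots> = 2 * (\<Sum>j<?d. if even j then t j else 0)" by (simp add: sum_distrib_left)
  finally have "int (hm UNIV) - int (hp UNIV) = (\<Sum>j<?d. if even j then t j else 0)" by simp
  also have "\<dots> = (\<Sum>k<?d. t (2*k))"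
  proof (rule ev_sum)
    fix j assume "j \<ge> ?d"
    then show "t j = 0" using hp_small[OF hw_small] by (simp add: t_def)
  qed
  finally show ?thesis by (simp add: t_def)
qed

lemma G_small: "j \<ge> vec.dim (UNIV :: 'n cvec set) \<Longrightarrow> G (of_nat j) \<subseteq> {0}"
proof
  fix x assume j: "j \<ge> vec.dim (UNIV :: 'n cvec set)" and x: "x \<in> G (of_nat j)"
  show "x \<in> {0}"
  proof (rule ccontr)
    assume "x \<notin> {0}"
    then obtain i :: int where "of_nat j = (of_int i :: complex)" "i < int (vec.dim (UNIV :: 'n cvec set))"
      using eig_int[of x "of_nat j"] x by (auto simp: G_def)
    then have "(of_int (int j) :: complex) = of_int i" by simp
    then have "int j = i" by (simp only: of_int_eq_iff)
    then show False using j \<open>i < _\<close> by simp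
  qed
qed

lemma G_rec:
  "vec.dim (G (of_nat j)) = vec.dim (hw (of_nat j)) + vec.dim (G (of_nat (j + 2)))"
proof -
  let ?X = "G (of_nat j)" and ?Y = "G (of_nat (j+2))"
  have EX: "E ` ?X \<subseteq> ?Y"
  proof
    fix y assume "y \<in> E ` ?X"
    then obtain x where x: "x \<in> ?X" "y = E x" by auto
    have "Hh (E x) = E (of_nat j *s x) + 2 *s E x" using HE'[of x] x(1) by (simp add: G_def)
    then have "Hh (E x) = of_nat j *s E x + 2 *s E x" by (simp only: E_scale)
    then show "y \<in> ?Y" using x(2) by (simp add: G_def vector_sadd_rdistrib)
  qed
  have FY: "F ` ?Y \<subseteq> ?X"
  proof
    fix y assume "y \<in> F ` ?Y"
    then obtain x where x: "x \<in> ?Y" "y = F x" by auto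
    have "Hh (F x) = F (of_nat (j + 2) *s x) - 2 *s F x" using HF'[of x] x(1) by (simp only: G_def mem_Collect_eq)
    then have "Hh (F x) = of_nat (j + 2) *s F x - 2 *s F x" by (simp only: F_scale)
    then have "Hh (F x) = (of_nat (j + 2) - 2) *s F x" by (simp only: vector_sub_rdistrib)
    then show "y \<in> ?X" using x(2) by (simp add: G_def)
  qed
  note rt = rank_trick[OF subspace_G subspace_G EX FY]
  have XK: "?X \<inter> {x. E x = 0} = hw (of_nat j)" by (auto simp: hw_G)
  have sFY: "vec.subspace (F ` ?Y)" by (rule vec.linear_subspace_image[OF linF subspace_G])
  have eqX: "?X = ssum (hw (of_nat j)) (F ` ?Y)" using rt(1) unfolding XK .
  have i0: "hw (of_nat j) \<inter> F ` ?Y \<subseteq> {0}" using rt(2) unfolding XK .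
  have "vec.dim (ssum (hw (of_nat j)) (F ` ?Y)) = vec.dim (hw (of_nat j)) + vec.dim (F ` ?Y)"
    by (rule dim_ssum[OF subspace_hw sFY i0])
  then have "vec.dim ?X = vec.dim (hw (of_nat j)) + vec.dim (F ` ?Y)"
    by (subst eqX) assumption
  moreover have "vec.dim (F ` ?Y) = vec.dim ?Y"
  proof -
    have sY: "vec.span ?Y = ?Y" using vec.span_subspace[OF subset_refl vec.span_superset subspace_G] .
    have "inj_on F ?Y"
    proof (rule inj_onI)
      fix x y assume xy: "x \<in> ?Y" "y \<in> ?Y" "F x = F y"
      have "x - y \<in> ?Y" using xy subspace_G by (auto intro: vec.subspace_diff)
      then have "Hh (x - y) = of_int (int j + 2) *s (x - y)" by (simp add: G_def)
      moreover have "F (x - y) = 0" using xy F_diff by simp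
      ultimately have "x - y = 0" using F_inj_pos[of "x - y" "int j + 2"] by simp
      then show "x = y" by simp
    qed
    then have "inj_on F (vec.span ?Y)" unfolding sY .
    then show ?thesis by (rule vec.dim_image_eq[OF linF])
  qed
  ultimately show ?thesis by simp
qed

lemma G0_sum:
  "vec.dim (G 0) = (\<Sum>k<vec.dim (UNIV :: 'n cvec set). vec.dim (hw (of_nat (2*k))))"
proof -
  let ?d = "vec.dim (UNIV :: 'n cvec set)"
  have P: "\<forall>i. ?d \<le> i + n \<longrightarrow> vec.dim (G (of_nat (2*i))) = (\<Sum>k\<in>{i..<?d}. vec.dim (hw (of_nat (2*k))))" for n
  proof (induction n)
    case 0
    show ?case
    proof (intro allI impI)
      fix i assume "?d \<le> i + 0"
      then have "G (of_nat (2*i)) \<subseteq> {0}" using G_small[of "2*i"] by simp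
      then show "vec.dim (G (of_nat (2*i))) = (\<Sum>k\<in>{i..<?d}. vec.dim (hw (of_nat (2*k))))"
        using \<open>?d \<le> i + 0\<close> by simp
    qed
  next
    case (Suc n)
    show ?case
    proof (intro allI impI)
      fix i assume i: "?d \<le> i + Suc n"
      show "vec.dim (G (of_nat (2*i))) = (\<Sum>k\<in>{i..<?d}. vec.dim (hw (of_nat (2*k))))"
      proof (cases "?d \<le> i + n")
        case True then show ?thesis using Suc.IH by blast
      next
        case False
        then have id: "i < ?d" by simp
        have "vec.dim (G (of_nat (2*i))) = vec.dim (hw (of_nat (2*i))) + vec.dim (G (of_nat (2*(Suc i))))"
          using G_rec[of "2*i"] by (simp only: mult_Suc_right add.commute)
        also have "vec.dim (G (of_nat (2*(Suc i)))) = (\<Sum>k\<in>{Suc i..<?d}. vec.dim (hw (of_nat (2*k))))"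
          using Suc.IH[rule_format, of "Suc i"] i by simp
        finally show ?thesis
          using sum.atLeast_Suc_lessThan[OF id, of "\<lambda>k. vec.dim (hw (of_nat (2*k)))"] by simp
      qed
    qed
  qed
  show ?thesis using P[of ?d, rule_format, of 0] by (simp add: atLeast0LessThan)
qed

end

lemma lin_expand:
  assumes A: "lin A" shows "A x = (\<Sum>k\<in>UNIV. x $ k *s A (axis k 1))"
proof -
  have "A x = A (\<Sum>k\<in>UNIV. x $ k *s axis k 1)" by (simp add: basis_expansion)
  also have "\<dots> = (\<Sum>k\<in>UNIV. x $ k *s A (axis k 1))"
    by (simp add: vec.linear_sum[OF A] vec.linear_scale[OF A])
  finally show ?thesis .
qed

lemma ctrace_comp:
  assumes A: "lin A" and C: "lin C"
  shows "ctrace (\<lambda>z. A (C z)) = ctrace (\<lambda>z. C (A z))"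
proof -
  have "ctrace (\<lambda>z. A (C z)) = (\<Sum>i\<in>UNIV. \<Sum>k\<in>UNIV. C (axis i 1) $ k * A (axis k 1) $ i)"
    unfolding ctrace_def by (subst lin_expand[OF A]) simp
  also have "\<dots> = (\<Sum>k\<in>UNIV. \<Sum>i\<in>UNIV. C (axis i 1) $ k * A (axis k 1) $ i)"
    by (rule sum.swap)
  also have "\<dots> = ctrace (\<lambda>z. C (A z))"
    unfolding ctrace_def by (subst lin_expand[OF C]) (simp add: mult.commute)
  finally show ?thesis .
qed

lemma ctrace_add: "ctrace (\<lambda>z. A z + C z) = ctrace A + ctrace C"
  unfolding ctrace_def by (simp add: sum.distrib)
lemma ctrace_diff: "ctrace (\<lambda>z. A z - C z) = ctrace A - ctrace C"
  unfolding ctrace_def by (simp add: sum_subtractf)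
lemma ctrace_scale: "ctrace (\<lambda>z. c *s A z) = c * ctrace A"
  unfolding ctrace_def by (simp add: sum_distrib_left)

locale lie = fixes br :: "'n::finite cvec \<Rightarrow> 'n cvec \<Rightarrow> 'n cvec"
  assumes la: "lie_algebra br"
begin

lemma lin_br: "lin (br x)" using la unfolding lie_algebra_def by blast
lemma lin_br1: "lin (\<lambda>x. br x y)" using la unfolding lie_algebra_def by blast
lemma br_self: "br x x = 0" using la unfolding lie_algebra_def by blast
lemma jacobi: "br x (br y z) + br y (br z x) + br z (br x y) = 0" using la unfolding lie_algebra_def by blast

lemma br_add1: "br (x + y) z = br x z + br y z" using vec.linear_add[OF lin_br1] .
lemma br_add2: "br z (x + y) = br z x + br z y" using vec.linear_add[OF lin_br] .
lemma br_scale1: "br (c *s x) z = c *s br x z" using vec.linear_scale[OF lin_br1] .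
lemma br_scale2: "br z (c *s x) = c *s br z x" using vec.linear_scale[OF lin_br] .
lemma br_diff1: "br (x - y) z = br x z - br y z" using vec.linear_diff[OF lin_br1] .
lemma br_diff2: "br z (x - y) = br z x - br z y" using vec.linear_diff[OF lin_br] .
lemma br_neg1: "br (- x) z = - br x z" using vec.linear_neg[OF lin_br1] .
lemma br_neg2: "br z (- x) = - br z x" using vec.linear_neg[OF lin_br] .
lemma br_01: "br 0 z = 0" using vec.linear_0[OF lin_br1] .
lemma br_02: "br z 0 = 0" using vec.linear_0[OF lin_br] .

lemma br_anti: "br y x = - br x y"
proof -
  have "br (x + y) (x + y) = br x x + br y x + (br x y + br y y)" by (simp only: br_add1 br_add2)
  then have "br x y + br y x = 0" by (simp add: br_self add.commute)
  then show ?thesis by (simp add: add_eq_0_iff)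
qed

lemma jac2: "br (br a b) z = br a (br b z) - br b (br a z)"
proof -
  have "br a (br b z) + br b (br z a) + br z (br a b) = 0" by (rule jacobi)
  moreover have "br z (br a b) = - br (br a b) z" by (rule br_anti)
  moreover have "br b (br z a) = - br b (br a z)" using br_anti[of a z] by (simp add: br_neg2)
  ultimately show ?thesis by (simp add: algebra_simps)
qed

lemma killing_add1: "killing br (x + x') y = killing br x y + killing br x' y"
  unfolding killing_def by (simp add: br_add1 ctrace_add)
lemma killing_scale1: "killing br (c *s x) y = c * killing br x y"
  unfolding killing_def by (simp add: br_scale1 ctrace_scale)
lemma killing_add2: "killing br x (y + y') = killing br x y + killing br x y'"
  unfolding killing_def by (simp add: br_add1 br_add2 ctrace_add)
lemma killing_scale2: "killing br x (c *s y) = c * killing br x y"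
  unfolding killing_def by (simp add: br_scale1 br_scale2 ctrace_scale)
lemma killing_01: "killing br 0 y = 0"
  using killing_scale1[of 0 0 y] by simp
lemma killing_02: "killing br x 0 = 0"
  using killing_scale2[of x 0 0] by simp

lemma killing_sym: "killing br x y = killing br y x"
  unfolding killing_def by (rule ctrace_comp[OF lin_br lin_br])

lemma lin_comp2: "lin (\<lambda>w. br x (br y w))"
  using Vector_Spaces.linear_compose[OF lin_br lin_br] by (simp add: comp_def)

lemma killing_inv: "killing br (br z x) y = - killing br x (br z y)"
proof -
  have a: "killing br (br z x) y = ctrace (\<lambda>w. br z (br x (br y w))) - ctrace (\<lambda>w. br x (br z (br y w)))"
    unfolding killing_def jac2 by (rule ctrace_diff)
  have b: "killing br x (br z y) = ctrace (\<lambda>w. br x (br z (br y w))) - ctrace (\<lambda>w. br x (br y (br z w)))"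
    unfolding killing_def jac2 br_diff2 by (rule ctrace_diff)
  have c: "ctrace (\<lambda>w. br z (br x (br y w))) = ctrace (\<lambda>w. br x (br y (br z w)))"
    using ctrace_comp[OF lin_br lin_comp2, of z x y] by simp
  show ?thesis using a b c by simp
qed

lemma killing_aut:
  assumes s: "lin s" and hom: "\<And>x y. s (br x y) = br (s x) (s y)" and inv: "\<And>x. s (s x) = x"
  shows "killing br (s x) (s y) = killing br x y"
proof -
  have ad: "br (s x) w = s (br x (s w))" for x w using hom[of x "s w"] inv by simp
  have "killing br (s x) (s y) = ctrace (\<lambda>w. s (br x (br y (s w))))"
    unfolding killing_def ad inv ..
  also have "\<dots> = ctrace (\<lambda>w. br x (br y (s (s w))))"
  proof -
    have l2: "lin (\<lambda>w. br x (br y (s w)))"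
      using Vector_Spaces.linear_compose[OF s lin_comp2] by (simp add: comp_def)
    show ?thesis using ctrace_comp[OF s l2] .
  qed
  also have "\<dots> = killing br x y" unfolding killing_def inv ..
  finally show ?thesis .
qed

end

locale cset = lie br for br :: "'n::finite cvec \<Rightarrow> 'n cvec \<Rightarrow> 'n cvec" +
  fixes tau sg :: "'n cvec \<Rightarrow> 'n cvec" and eh hh fh :: "'n cvec"
  assumes rf: "real_form_conj br tau"
    and ci: "complexified_cartan_involution br tau sg"
    and reh: "eh \<in> real_form tau" and rhh: "hh \<in> real_form tau" and rfh: "fh \<in> real_form tau"
    and tr: "sl2_triple br eh hh fh"
    and seh: "sg eh = - fh" and shh: "sg hh = - hh"
begin

definition "e = cayley_e eh hh fh"
definition "h = cayley_h eh hh fh"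
definition "f = cayley_f eh hh fh"
definition "th x = sg (tau x)"
definition "HH x y = - killing br x (th y)"

lemma tau_add: "tau (x + y) = tau x + tau y" using rf unfolding real_form_conj_def by blast
lemma tau_scale: "tau (c *s x) = cnj c *s tau x" using rf unfolding real_form_conj_def by blast
lemma tau_tau: "tau (tau x) = x" using rf unfolding real_form_conj_def by blast
lemma tau_br: "tau (br x y) = br (tau x) (tau y)" using rf unfolding real_form_conj_def by blast
lemma tau_neg: "tau (- x) = - tau x" using tau_scale[of "-1" x] by (simp add: vector_sneg_minus1[symmetric])
lemma tau_diff: "tau (x - y) = tau x - tau y" using tau_add[of x "- y"] tau_neg[of y] by simp
lemma tau_0: "tau 0 = 0" using tau_scale[of 0 0] by simp

lemma sg_aut: "lie_automorphism br sg" using ci unfolding complexified_cartan_involution_def by blast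
lemma lin_sg: "lin sg" using sg_aut unfolding lie_automorphism_def by blast
lemma sg_br: "sg (br x y) = br (sg x) (sg y)" using sg_aut unfolding lie_automorphism_def by blast
lemma sg_sg: "sg (sg x) = x" using ci unfolding complexified_cartan_involution_def by blast
lemma tau_sg: "tau (sg x) = sg (tau x)" using ci unfolding complexified_cartan_involution_def by blast
lemma cartan: "x \<in> real_form tau \<Longrightarrow> x \<noteq> 0 \<Longrightarrow> Im (killing br x (sg x)) = 0 \<and> Re (killing br x (sg x)) < 0"
  using ci unfolding complexified_cartan_involution_def by blast

lemma sg_add: "sg (x + y) = sg x + sg y" using vec.linear_add[OF lin_sg] .
lemma sg_scale: "sg (c *s x) = c *s sg x" using vec.linear_scale[OF lin_sg] .
lemma sg_diff: "sg (x - y) = sg x - sg y" using vec.linear_diff[OF lin_sg] .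
lemma sg_neg: "sg (- x) = - sg x" using vec.linear_neg[OF lin_sg] .

lemma teh: "tau eh = eh" using reh by (simp add: real_form_def)
lemma thh: "tau hh = hh" using rhh by (simp add: real_form_def)
lemma tfh: "tau fh = fh" using rfh by (simp add: real_form_def)
lemma sfh: "sg fh = - eh"
proof -
  have "- sg fh = eh" using sg_sg[of eh] seh sg_neg[of fh] by simp
  then show ?thesis by (metis minus_minus)
qed

lemma b_he: "br hh eh = 2 *s eh" using tr by (simp add: sl2_triple_def)
lemma b_hf: "br hh fh = - (2 *s fh)" using tr by (simp add: sl2_triple_def)
lemma b_ef: "br eh fh = hh" using tr by (simp add: sl2_triple_def)
lemma b_eh: "br eh hh = - (2 *s eh)" using b_he br_anti[of eh hh] by simp
lemma b_fh: "br fh hh = 2 *s fh" using b_hf br_anti[of fh hh] by simp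
lemma b_fe: "br fh eh = - hh" using b_ef br_anti[of fh eh] by simp

lemmas bb = b_he b_hf b_ef b_eh b_fh b_fe br_self

lemmas brl = br_add1 br_add2 br_scale1 br_scale2 br_diff1 br_diff2 br_neg1 br_neg2

lemma sl2_he: "br h e = 2 *s e"
  unfolding h_def e_def cayley_h_def cayley_e_def
  by (simp add: brl bb) (simp add: vec_eq_iff algebra_simps)

lemma sl2_hf: "br h f = - (2 *s f)"
  unfolding h_def f_def cayley_h_def cayley_f_def
  by (simp add: brl bb) (simp add: vec_eq_iff algebra_simps)

lemma sl2_ef: "br e f = h"
  unfolding h_def f_def e_def cayley_h_def cayley_f_def cayley_e_def
  by (simp add: brl bb) (simp add: vec_eq_iff algebra_simps)

lemma sg_e: "sg e = - e"
  unfolding e_def cayley_e_def by (simp only: sg_add sg_scale seh sfh shh) (simp add: vec_eq_iff algebra_simps)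
lemma sg_h: "sg h = h"
  unfolding h_def cayley_h_def by (simp only: sg_diff sg_scale seh sfh) (simp add: vec_eq_iff algebra_simps)
lemma sg_f: "sg f = - f"
  unfolding f_def cayley_f_def by (simp only: sg_add sg_diff sg_scale seh sfh shh) (simp add: vec_eq_iff algebra_simps)

lemma th_e: "th e = - f"
  unfolding th_def e_def f_def cayley_e_def cayley_f_def
  by (simp only: tau_add tau_scale teh thh tfh sg_add sg_scale seh sfh shh) (simp add: vec_eq_iff algebra_simps)
lemma th_f: "th f = - e"
  unfolding th_def e_def f_def cayley_e_def cayley_f_def
  by (simp only: tau_add tau_diff tau_scale teh thh tfh sg_add sg_diff sg_scale seh sfh shh) (simp add: vec_eq_iff algebra_simps)
lemma th_h: "th h = - h"
  unfolding th_def h_def cayley_h_def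
  by (simp only: tau_diff tau_scale teh tfh sg_diff sg_scale seh sfh) (simp add: vec_eq_iff algebra_simps)

end

context cset
begin

lemma th_add: "th (x + y) = th x + th y" by (simp add: th_def tau_add sg_add)
lemma th_scale: "th (c *s x) = cnj c *s th x" by (simp add: th_def tau_scale sg_scale)
lemma th_neg: "th (- x) = - th x" by (simp add: th_def tau_neg sg_neg)
lemma th_th: "th (th x) = x" by (simp add: th_def tau_sg[symmetric] tau_tau sg_sg)
lemma th_br: "th (br a b) = br (th a) (th b)" by (simp add: th_def tau_br sg_br)

lemma killing_neg2: "killing br x (- y) = - killing br x y"
  using killing_scale2[of x "-1" y] by (simp add: vector_sneg_minus1[symmetric])

lemma HH_adj: "HH (br z x) y = - HH x (br (th z) y)"
proof -
  have "HH (br z x) y = killing br x (br z (th y))" unfolding HH_def by (simp add: killing_inv)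
  also have "br z (th y) = th (br (th z) y)" by (simp add: th_br th_th)
  finally show ?thesis unfolding HH_def by simp
qed

lemma HH_neg2: "HH x (- y) = - HH x y"
  unfolding HH_def by (simp add: th_neg killing_neg2)

lemma adjE': "HH (br e x) y = HH x (br f y)"
  using HH_adj[of e x y] th_e by (simp add: br_neg1 HH_neg2)
lemma adjF': "HH (br f x) y = HH x (br e y)"
  using HH_adj[of f x y] th_f by (simp add: br_neg1 HH_neg2)
lemma adjH': "HH (br h x) y = HH x (br h y)"
  using HH_adj[of h x y] th_h by (simp add: br_neg1 HH_neg2)

lemma killing_swap_sg: "killing br a (sg b) = killing br b (sg a)"
proof -
  have "killing br b (sg a) = killing br (sg b) (sg (sg a))"
    using killing_aut[OF lin_sg sg_br sg_sg] by simp
  also have "\<dots> = killing br a (sg b)" by (simp add: sg_sg killing_sym)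
  finally show ?thesis by simp
qed

lemma cart_re: "w \<in> real_form tau \<Longrightarrow> Re (killing br w (sg w)) \<le> 0 \<and> Im (killing br w (sg w)) = 0"
  using cartan[of w] by (cases "w = 0") (auto simp: killing_01)

lemma HHpos: "x \<noteq> 0 \<Longrightarrow> Re (HH x x) > 0"
proof -
  assume x0: "x \<noteq> 0"
  define a where "a = (1/2) *s (x + tau x)"
  define b where "b = (- \<i> / 2) *s (x - tau x)"
  have ta: "tau a = a" unfolding a_def by (simp add: tau_scale tau_add tau_tau add.commute)
  have tb: "tau b = b" unfolding b_def by (simp add: tau_scale tau_diff tau_tau vec_eq_iff algebra_simps)
  have xab: "x = a + \<i> *s b" unfolding a_def b_def by (simp add: vec_eq_iff field_simps)
  have txab: "tau x = a - \<i> *s b" unfolding a_def b_def by (simp add: vec_eq_iff field_simps)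
  have ra: "a \<in> real_form tau" using ta by (simp add: real_form_def)
  have rb: "b \<in> real_form tau" using tb by (simp add: real_form_def)
  have "th x = sg a - \<i> *s sg b" unfolding th_def txab by (simp add: sg_diff sg_scale)
  then have "killing br x (th x) = killing br (a + \<i> *s b) (sg a - \<i> *s sg b)" using xab by simp
  also have "\<dots> = killing br a (sg a) - \<i> * killing br a (sg b) + \<i> * killing br b (sg a) + killing br b (sg b)"
  proof -
    have "killing br (a + \<i> *s b) (sg a - \<i> *s sg b) =
      killing br a (sg a) + killing br a (- (\<i> *s sg b)) + (\<i> * killing br b (sg a) + \<i> * killing br b (- (\<i> *s sg b)))"
      by (simp only: diff_conv_add_uminus killing_add1 killing_add2 killing_scale1 add_ac)
    also have "\<dots> = killing br a (sg a) - \<i> * killing br a (sg b) + \<i> * killing br b (sg a) + killing br b (sg b)"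
      by (simp add: killing_neg2 killing_scale2 algebra_simps)
    finally show ?thesis .
  qed
  also have "\<dots> = killing br a (sg a) + killing br b (sg b)" using killing_swap_sg[of a b] by simp
  finally have Hx: "HH x x = - killing br a (sg a) - killing br b (sg b)" unfolding HH_def by simp
  have "a \<noteq> 0 \<or> b \<noteq> 0" using x0 xab by auto
  then have "Re (killing br a (sg a)) < 0 \<or> Re (killing br b (sg b)) < 0"
    using cartan[OF ra] cartan[OF rb] by auto
  moreover have "Re (killing br a (sg a)) \<le> 0" "Re (killing br b (sg b)) \<le> 0"
    using cart_re[OF ra] cart_re[OF rb] by auto
  ultimately show ?thesis using Hx by auto
qed

lemma HH_add1: "HH (x + y) z = HH x z + HH y z" unfolding HH_def by (simp add: killing_add1)
lemma HH_scale1: "HH (c *s x) z = c * HH x z" unfolding HH_def by (simp add: killing_scale1)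
lemma HH_add2: "HH z (x + y) = HH z x + HH z y" unfolding HH_def by (simp add: th_add killing_add2)
lemma HH_scale2: "HH z (c *s x) = cnj c * HH z x" unfolding HH_def by (simp add: th_scale killing_scale2)

lemma is_sl2h: "sl2h (br e) (br f) (br h) sg HH"
proof (rule sl2h.intro)
  show "lin (br e)" "lin (br f)" "lin (br h)" by (rule lin_br)+
  show "lin sg" by (rule lin_sg)
  show "br h (br e x) - br e (br h x) = 2 *s br e x" for x
    using jac2[of h e x] sl2_he by (simp add: br_scale1)
  show "br h (br f x) - br f (br h x) = - (2 *s br f x)" for x
    using jac2[of h f x] sl2_hf by (simp add: br_scale1 br_neg1)
  show "br e (br f x) - br f (br e x) = br h x" for x
    using jac2[of e f x] sl2_ef by simp
  show "sg (sg x) = x" for x by (rule sg_sg)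
  show "sg (br e x) = - br e (sg x)" for x by (simp add: sg_br sg_e br_neg1)
  show "sg (br f x) = - br f (sg x)" for x by (simp add: sg_br sg_f br_neg1)
  show "sg (br h x) = br h (sg x)" for x by (simp add: sg_br sg_h)
  show "HH (x + y) z = HH x z + HH y z" for x y z by (rule HH_add1)
  show "HH (c *s x) z = c * HH x z" for c x z by (rule HH_scale1)
  show "HH z (x + y) = HH z x + HH z y" for x y z by (rule HH_add2)
  show "HH z (c *s x) = cnj c * HH z x" for c x z by (rule HH_scale2)
  show "x \<noteq> 0 \<Longrightarrow> 0 < Re (HH x x)" for x by (rule HHpos)
  show "HH (br e x) y = HH x (br f y)" for x y by (rule adjE')
  show "HH (br f x) y = HH x (br e y)" for x y by (rule adjF')
  show "HH (br h x) y = HH x (br h y)" for x y by (rule adjH')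
qed

end

context sl2h
begin

lemma sub_h_iff:
  assumes S: "vec.subspace S" and sS: "sgst S"
  shows "(\<forall>x\<in>S. sg x = x) \<longleftrightarrow> hm S = 0"
proof
  assume A: "\<forall>x\<in>S. sg x = x"
  have "S \<inter> {x. sg x = - x} \<subseteq> {0}"
  proof
    fix x assume "x \<in> S \<inter> {x. sg x = - x}"
    then have "x = - x" using A by auto
    then show "x \<in> {0}" by (simp add: vec_eq_iff)
  qed
  then show "hm S = 0" unfolding hm_def by simp
next
  assume "hm S = 0"
  then have Z: "S \<inter> {x. sg x = - x} \<subseteq> {0}" unfolding hm_def by simp
  show "\<forall>x\<in>S. sg x = x"
  proof
    fix x assume x: "x \<in> S"
    define q where "q = (1/2) *s (x - sg x)"
    have "sg q = (1/2) *s (sg x - sg (sg x))" unfolding q_def by (simp only: sg_diff sg_scale)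
    then have "sg q = - q" unfolding q_def by (simp add: ss vec_eq_iff algebra_simps)
    moreover have "q \<in> S" unfolding q_def using x sS S
      by (auto simp: sgst_def vec.subspace_diff vec.subspace_scale)
    ultimately have "q = 0" using Z by auto
    then show "sg x = x" unfolding q_def by (simp add: vec_eq_iff)
  qed
qed

lemma sub_m_iff:
  assumes S: "vec.subspace S" and sS: "sgst S"
  shows "(\<forall>x\<in>S. sg x = - x) \<longleftrightarrow> hp S = 0"
proof
  assume A: "\<forall>x\<in>S. sg x = - x"
  have "S \<inter> {x. sg x = x} \<subseteq> {0}"
  proof
    fix x assume "x \<in> S \<inter> {x. sg x = x}"
    then have "x = - x" using A by auto
    then show "x \<in> {0}" by (simp add: vec_eq_iff)
  qed
  then show "hp S = 0" unfolding hp_def by simp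
next
  assume "hp S = 0"
  then have Z: "S \<inter> {x. sg x = x} \<subseteq> {0}" unfolding hp_def by simp
  show "\<forall>x\<in>S. sg x = - x"
  proof
    fix x assume x: "x \<in> S"
    define q where "q = (1/2) *s (x + sg x)"
    have "sg q = (1/2) *s (sg x + sg (sg x))" unfolding q_def by (simp only: sg_add sg_scale)
    then have "sg q = q" unfolding q_def by (simp add: ss algebra_simps)
    moreover have "q \<in> S" unfolding q_def using x sS S
      by (auto simp: sgst_def vec.subspace_add vec.subspace_scale)
    ultimately have "q = 0" using Z by auto
    then show "sg x = - x" unfolding q_def by (simp add: vec_eq_iff add_eq_0_iff)
  qed
qed

lemma dimU_pos: "0 < vec.dim (UNIV :: 'n cvec set)"
proof -
  have "(axis undefined 1 :: 'n cvec) \<noteq> 0" by (simp add: axis_def vec_eq_iff)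
  then have "\<not> (UNIV :: 'n cvec set) \<subseteq> {0}" by blast
  then show ?thesis by (simp add: vec.dim_eq_0[symmetric] del: vec.dim_eq_0)
qed

definition PP where
  "PP \<longleftrightarrow> (\<forall>v\<in>hw 0. sg v = v) \<and> (\<forall>j. even j \<and> 0 < j \<longrightarrow> (\<forall>v\<in>hw (of_nat j). sg v = - v))"

lemma counting_equiv:
  "((\<forall>v\<in>hw 0. sg v = v) \<and>
     int (hm UNIV) - int (hp UNIV) = int (vec.dim (G 0)) - 2 * int (vec.dim (hw 0))) \<longleftrightarrow> PP"
proof -
  let ?d = "vec.dim (UNIV :: 'n cvec set)"
  define p where "p k = hp (hw (of_nat (2*k)))" for k
  define q where "q k = hm (hw (of_nat (2*k)))" for k
  have dk: "vec.dim (hw (of_nat (2*k))) = p k + q k" for k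
    unfolding p_def q_def by (rule dim_split[OF subspace_hw sgst_hw])
  have sd: "int (hm UNIV) - int (hp UNIV) = (\<Sum>k<?d. int (q k) - int (p k))"
    using main_sd unfolding p_def q_def .
  have g0: "int (vec.dim (G 0)) = (\<Sum>k<?d. int (p k) + int (q k))"
    using G0_sum dk by (simp add: of_nat_sum)
  have h0: "hw 0 = hw (of_nat (2*0))" by simp
  have d0: "vec.dim (hw 0) = p 0 + q 0" using dk[of 0] by simp
  have split: "(\<Sum>k<?d. g k) = g 0 + (\<Sum>k\<in>{1..<?d}. g k)" for g :: "nat \<Rightarrow> int"
  proof -
    have "(\<Sum>k<?d. g k) = (\<Sum>k\<in>{0..<?d}. g k)" by (simp add: atLeast0LessThan)
    also have "\<dots> = g 0 + (\<Sum>k\<in>{Suc 0..<?d}. g k)" by (rule sum.atLeast_Suc_lessThan[OF dimU_pos])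
    finally show ?thesis by simp
  qed
  have c_iff: "(\<forall>v\<in>hw 0. sg v = v) \<longleftrightarrow> q 0 = 0"
    using sub_h_iff[OF subspace_hw sgst_hw, of 0] unfolding q_def by simp
  have m_iff: "(\<forall>v\<in>hw (of_nat (2*k)). sg v = - v) \<longleftrightarrow> p k = 0" for k
    using sub_m_iff[OF subspace_hw sgst_hw] unfolding p_def by simp
  have PP_iff: "PP \<longleftrightarrow> q 0 = 0 \<and> (\<forall>k\<in>{1..<?d}. p k = 0)"
  proof
    assume P: PP
    have "q 0 = 0" using P c_iff unfolding PP_def by blast
    moreover have "p k = 0" if k: "k \<in> {1..<?d}" for k
    proof -
      have "even (2*k)" "0 < 2*k" using k by auto
      then have "\<forall>v\<in>hw (of_nat (2*k)). sg v = - v" using P unfolding PP_def by blast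
      then show ?thesis using m_iff by blast
    qed
    ultimately show "q 0 = 0 \<and> (\<forall>k\<in>{1..<?d}. p k = 0)" by blast
  next
    assume A: "q 0 = 0 \<and> (\<forall>k\<in>{1..<?d}. p k = 0)"
    have "\<forall>v\<in>hw 0. sg v = v" using A c_iff by blast
    moreover have "\<forall>v\<in>hw (of_nat j). sg v = - v" if j: "even j" "0 < j" for j
    proof -
      obtain k where k: "j = 2*k" using j(1) by blast
      then have k1: "1 \<le> k" using j(2) by simp
      show ?thesis
      proof (cases "k < ?d")
        case True
        then have "p k = 0" using A k1 by auto
        then show ?thesis using m_iff k by blast
      next
        case False
        then have "j \<ge> ?d" using k by simp
        then have "hw (of_nat j) \<subseteq> {0}" by (rule hw_small)
        then show ?thesis using lin_E_props by auto
      qed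
    qed
    ultimately show PP unfolding PP_def by blast
  qed
  have sp: "(\<Sum>k\<in>{1..<?d}. int (p k)) = 0 \<longleftrightarrow> (\<forall>k\<in>{1..<?d}. p k = 0)"
  proof -
    have e1: "(\<Sum>k\<in>{1..<?d}. int (p k)) = int (\<Sum>k\<in>{1..<?d}. p k)" by (simp add: of_nat_sum)
    have e2: "(\<Sum>k\<in>{1..<?d}. p k) = 0 \<longleftrightarrow> (\<forall>k\<in>{1..<?d}. p k = 0)" by (rule sum_eq_0_iff) simp
    show ?thesis unfolding e1 of_nat_eq_0_iff e2 ..
  qed
  have eq: "int (hm UNIV) - int (hp UNIV) - (int (vec.dim (G 0)) - 2 * int (vec.dim (hw 0)))
       = 2 * int (q 0) - 2 * (\<Sum>k\<in>{1..<?d}. int (p k))"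
  proof -
    have a: "int (hm UNIV) - int (hp UNIV) = (int (q 0) - int (p 0)) + (\<Sum>k\<in>{1..<?d}. int (q k) - int (p k))"
      using sd split[of "\<lambda>k. int (q k) - int (p k)"] by simp
    have b: "int (vec.dim (G 0)) = (int (p 0) + int (q 0)) + (\<Sum>k\<in>{1..<?d}. int (p k) + int (q k))"
      using g0 split[of "\<lambda>k. int (p k) + int (q k)"] by simp
    have c: "(\<Sum>k\<in>{1..<?d}. int (q k) - int (p k)) = (\<Sum>k\<in>{1..<?d}. int (p k) + int (q k)) - 2 * (\<Sum>k\<in>{1..<?d}. int (p k))"
      by (simp add: sum_subtractf sum.distrib sum_distrib_left)
    show ?thesis using a b c d0 by simp
  qed
  show ?thesis
  proof
    assume A: "(\<forall>v\<in>hw 0. sg v = v) \<and>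
      int (hm UNIV) - int (hp UNIV) = int (vec.dim (G 0)) - 2 * int (vec.dim (hw 0))"
    then have "q 0 = 0" using c_iff by blast
    then have "(\<Sum>k\<in>{1..<?d}. int (p k)) = 0" using A eq by simp
    then show PP using PP_iff sp \<open>q 0 = 0\<close> by blast
  next
    assume P: PP
    then have q0: "q 0 = 0" and pk: "\<forall>k\<in>{1..<?d}. p k = 0" using PP_iff by auto
    then have "(\<Sum>k\<in>{1..<?d}. int (p k)) = 0" using sp by blast
    then have "int (hm UNIV) - int (hp UNIV) = int (vec.dim (G 0)) - 2 * int (vec.dim (hw 0))"
      using eq q0 by simp
    then show "(\<forall>v\<in>hw 0. sg v = v) \<and>
      int (hm UNIV) - int (hp UNIV) = int (vec.dim (G 0)) - 2 * int (vec.dim (hw 0))"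
      using q0 c_iff by blast
  qed
qed

lemma lin_Fk_neg: "(F ^^ k) (- x) = - (F ^^ k) x"
  using vec.linear_neg[OF lin_funpow[OF linF]] .

end

context cset
begin

lemma ext_iff: "extended_magical_real br sg eh hh fh \<longleftrightarrow> sl2h.PP (br e) (br h) sg"
proof -
  interpret S: sl2h "br e" "br f" "br h" sg HH by (rule is_sl2h)
  have hwS: "hw_space br e h j = S.hw (of_nat j)" for j by (simp add: hw_space_def S.hw_def)
  have ag: "extended_magical_real br sg eh hh fh = agrees_with_magical_even br sg e h f"
    by (simp add: extended_magical_real_def e_def h_def f_def)
  show ?thesis
    unfolding ag
  proof
    assume A: "agrees_with_magical_even br sg e h f"
    have "sg v = v" if "v \<in> S.hw 0" for v
      using A that hwS[of 0] unfolding agrees_with_magical_even_def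
      by (metis (no_types, lifting) even_zero le_refl funpow_0 of_nat_0)
    moreover have "sg v = - v" if "even j" "0 < j" "v \<in> S.hw (of_nat j)" for j v
    proof -
      have v': "v \<in> hw_space br e h j" using that(3) hwS by simp
      have "sg ((br f ^^ 0) v) = (if j = 0 then (br f ^^ 0) v else ((-1) ^ (0 + 1) :: complex) *s (br f ^^ 0) v)"
        using A v' that(1) unfolding agrees_with_magical_even_def by blast
      then show ?thesis using that(2) by (simp add: vector_sneg_minus1[symmetric])
    qed
    ultimately show "S.PP" unfolding S.PP_def by blast
  next
    assume P: "S.PP"
    show "agrees_with_magical_even br sg e h f"
      unfolding agrees_with_magical_even_def
    proof (intro allI impI)
      fix j k v assume j: "even j" and k: "k \<le> j" and v: "v \<in> hw_space br e h j"
      have vS: "v \<in> S.hw (of_nat j)" using v hwS by simp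
      show "sg ((br f ^^ k) v) = (if j = 0 then (br f ^^ k) v else ((-1) ^ (k + 1) :: complex) *s (br f ^^ k) v)"
      proof (cases "j = 0")
        case True
        then have "k = 0" using k by simp
        moreover have "sg v = v" using P vS True unfolding S.PP_def by auto
        ultimately show ?thesis using True by simp
      next
        case False
        then have "sg v = - v" using P vS j unfolding S.PP_def by auto
        then have "sg ((br f ^^ k) v) = (-1) ^ k *s (br f ^^ k) (- v)" using S.sg_Fk[of k v] by simp
        also have "\<dots> = ((-1) ^ (k + 1) :: complex) *s (br f ^^ k) v"
          by (simp add: S.lin_Fk_neg vec_eq_iff)
        finally show ?thesis using False by simp
      qed
    qed
  qed
qed

lemma main:
  "(extended_magical_real br sg eh hh fh \<longleftrightarrow>
            centralizer3 br (cayley_e eh hh fh) (cayley_h eh hh fh) (cayley_f eh hh fh)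
              \<subseteq> plus_space sg \<and>
            int (vec.dim (minus_space sg)) - int (vec.dim (plus_space sg)) =
            int (vec.dim (grade_space br (cayley_h eh hh fh) 0))
              - 2 * int (vec.dim (centralizer3 br (cayley_e eh hh fh) (cayley_h eh hh fh) (cayley_f eh hh fh))))
         \<and> (extended_magical_real br sg eh hh fh \<longrightarrow>
            (let cR = centralizer3 br (cayley_e eh hh fh) (cayley_h eh hh fh) (cayley_f eh hh fh)
                      \<inter> real_form tau
             in cR \<subseteq> plus_space sg \<inter> real_form tau \<and>
                (\<forall>x\<in>cR. x \<noteq> 0 \<longrightarrow> Im (killing br x x) = 0 \<and> Re (killing br x x) < 0)))"
proof -
  interpret S: sl2h "br e" "br f" "br h" sg HH by (rule is_sl2h)
  have fold: "cayley_e eh hh fh = e" "cayley_h eh hh fh = h" "cayley_f eh hh fh = f"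
    by (simp_all add: e_def h_def f_def)
  have cS: "centralizer3 br e h f = S.hw 0"
    using S.hw_zero_F by (auto simp: centralizer3_def S.hw_def)
  have gS: "grade_space br h 0 = S.G 0" by (simp add: grade_space_def S.G_def)
  have pS: "vec.dim (plus_space sg) = S.hp UNIV" by (simp add: plus_space_def S.hp_def)
  have mS: "vec.dim (minus_space sg) = S.hm UNIV" by (simp add: minus_space_def S.hm_def)
  have cp: "S.hw 0 \<subseteq> plus_space sg \<longleftrightarrow> (\<forall>v\<in>S.hw 0. sg v = v)" by (auto simp: plus_space_def)
  have part1: "extended_magical_real br sg eh hh fh \<longleftrightarrow>
      (S.hw 0 \<subseteq> plus_space sg \<and>
       int (S.hm UNIV) - int (S.hp UNIV) = int (vec.dim (S.G 0)) - 2 * int (vec.dim (S.hw 0)))"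
    unfolding ext_iff cp using S.counting_equiv by blast
  have part2: "(let cR = S.hw 0 \<inter> real_form tau
             in cR \<subseteq> plus_space sg \<inter> real_form tau \<and>
                (\<forall>x\<in>cR. x \<noteq> 0 \<longrightarrow> Im (killing br x x) = 0 \<and> Re (killing br x x) < 0))"
    if E: "extended_magical_real br sg eh hh fh"
  proof -
    have fix0: "\<forall>v\<in>S.hw 0. sg v = v" using E part1 cp by blast
    have "S.hw 0 \<inter> real_form tau \<subseteq> plus_space sg \<inter> real_form tau"
      using fix0 by (auto simp: plus_space_def)
    moreover have "Im (killing br x x) = 0 \<and> Re (killing br x x) < 0"
      if "x \<in> S.hw 0 \<inter> real_form tau" "x \<noteq> 0" for x
      using cartan[of x] that fix0 by auto
    ultimately show ?thesis by (simp add: Let_def)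
  qed
  show ?thesis unfolding fold cS gS pS mS using part1 part2 by blast
qed

end

theorem proposition3p4:
  fixes br :: "'n::finite cvec \<Rightarrow> 'n cvec \<Rightarrow> 'n cvec"
    and tau sg :: "'n cvec \<Rightarrow> 'n cvec"
    and eh hh fh :: "'n cvec"
  assumes "simple_lie_algebra br"
    and "real_form_conj br tau"
    and "complexified_cartan_involution br tau sg"
    and "eh \<in> real_form tau" and "hh \<in> real_form tau" and "fh \<in> real_form tau"
    and "sl2_triple br eh hh fh"
    and "sg eh = - fh" and "sg hh = - hh"
  shows "(extended_magical_real br sg eh hh fh \<longleftrightarrow>
            centralizer3 br (cayley_e eh hh fh) (cayley_h eh hh fh) (cayley_f eh hh fh)
              \<subseteq> plus_space sg \<and>
            int (vec.dim (minus_space sg)) - int (vec.dim (plus_space sg)) =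
            int (vec.dim (grade_space br (cayley_h eh hh fh) 0))
              - 2 * int (vec.dim (centralizer3 br (cayley_e eh hh fh) (cayley_h eh hh fh) (cayley_f eh hh fh))))
         \<and> (extended_magical_real br sg eh hh fh \<longrightarrow>
            (let cR = centralizer3 br (cayley_e eh hh fh) (cayley_h eh hh fh) (cayley_f eh hh fh)
                      \<inter> real_form tau
             in cR \<subseteq> plus_space sg \<inter> real_form tau \<and>
                (\<forall>x\<in>cR. x \<noteq> 0 \<longrightarrow> Im (killing br x x) = 0 \<and> Re (killing br x x) < 0)))"
proof -
  have "lie_algebra br" using assms(1) by (simp add: simple_lie_algebra_def)
  then interpret C: cset br tau sg eh hh fh
    using assms(2-9) by (simp add: cset_def cset_axioms_def lie_def)
  show ?thesis by (rule C.main)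
qed

end
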